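(* Let $(\Omega,\mathcal{F},\mathbb{P})$ be a nonatomic probability space and let $(\mathcal{X},\mathcal{X}^\ast)$ be a pair of law-invariant vector subspaces of $L^1$, each containing $L^\infty$, such that $XY\in L^1$ for all $X\in\mathcal{X}$ and $Y\in\mathcal{X}^\ast$. Let $S=(S_0,S_1)$ be an eligible asset and let $\rho:\mathcal{X}\to(-\infty,\infty]$ be a proper, convex, $\sigma(\mathcal{X},\mathcal{X}^\ast)$-lower semicontinuous, law-invariant, $S$-additive risk measure with $\rho(0)<\infty$. If $S$ is risky, then for every $X\in\mathcal{X}$ \[\rho(X)=\frac{S_0}{\mathbb{E}_{\mathbb{P}}[S_1]}\,\mathbb{E}_{\mathbb{P}}[-X]+\rho(0).\] Moreover, if $\rho$ is also cash-additive, then $\mathbb{E}_{\mathbb{P}}[S_1]=S_0$.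
   Context: An eligible asset is a pair $S=(S_0,S_1)$ with $S_0\in(0,\infty)$ and $S_1\in\mathcal{X}$ positive ($S_1\ge0$ a.s.) and nonzero; $S$ is risky if $S_1$ is not a.s. constant; $S$ is cash if $S=(1,1)$. A functional $\rho:\mathcal{X}\to(-\infty,\infty]$ is an $S$-additive risk measure if $\rho(X+mS_1)=\rho(X)-mS_0$ for all $X\in\mathcal{X}$, $m\in\mathbb{R}$, and $\rho$ is decreasing ($\rho(X)\le\rho(Y)$ whenever $X\ge Y$); cash-additive means $S$-additive for $S=(1,1)$. Proper means $\rho(X)<\infty$ for some $X$. Law invariance of a set or functional: invariance under replacing a random variable by one with the same law under $\mathbb{P}$. $\sigma(\mathcal{X},\mathcal{X}^\ast)$ is the weakest linear topology on $\mathcal{X}$ for which $X\mapsto\mathbb{E}_{\mathbb{P}}[XY]$ is continuous for every $Y\in\mathcal{X}^\ast$; lower semicontinuity is with respect to nets in this topology. *)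

theory Defs
  imports "HOL-Probability.Probability"
begin

text \<open>Random variables are real-valued measurable functions on the sample space;
  elements of L^1 etc. are represented by functions (identified up to law / a.e.
  equality through the law-invariance assumptions).\<close>

definition nonatomic :: "'a measure \<Rightarrow> bool" where
  "nonatomic M \<longleftrightarrow> (\<forall>A\<in>sets M. measure M A > 0 \<longrightarrow>
      (\<exists>B\<in>sets M. B \<subseteq> A \<and> 0 < measure M B \<and> measure M B < measure M A))"

definition same_law :: "'a measure \<Rightarrow> ('a \<Rightarrow> real) \<Rightarrow> ('a \<Rightarrow> real) \<Rightarrow> bool" where
  "same_law M X Y \<longleftrightarrow> X \<in> borel_measurable M \<and> Y \<in> borel_measurable M \<and>
      distr M borel X = distr M borel Y"

definition law_invariant_set :: "'a measure \<Rightarrow> ('a \<Rightarrow> real) set \<Rightarrow> bool" where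
  "law_invariant_set M \<X> \<longleftrightarrow> (\<forall>X\<in>\<X>. \<forall>Y. same_law M X Y \<longrightarrow> Y \<in> \<X>)"

definition law_invariant_fun ::
    "'a measure \<Rightarrow> ('a \<Rightarrow> real) set \<Rightarrow> (('a \<Rightarrow> real) \<Rightarrow> ereal) \<Rightarrow> bool" where
  "law_invariant_fun M \<X> \<rho> \<longleftrightarrow> (\<forall>X\<in>\<X>. \<forall>Y\<in>\<X>. same_law M X Y \<longrightarrow> \<rho> X = \<rho> Y)"

definition admissible_space :: "'a measure \<Rightarrow> ('a \<Rightarrow> real) set \<Rightarrow> bool" where
  "admissible_space M \<X> \<longleftrightarrow>
     (\<forall>X\<in>\<X>. integrable M X) \<and>
     (\<lambda>_. 0) \<in> \<X> \<and>
     (\<forall>X\<in>\<X>. \<forall>Y\<in>\<X>. (\<lambda>\<omega>. X \<omega> + Y \<omega>) \<in> \<X>) \<and>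
     (\<forall>X\<in>\<X>. \<forall>c::real. (\<lambda>\<omega>. c * X \<omega>) \<in> \<X>) \<and>
     (\<forall>X\<in>borel_measurable M. (\<exists>C. AE \<omega> in M. \<bar>X \<omega>\<bar> \<le> C) \<longrightarrow> X \<in> \<X>) \<and>
     law_invariant_set M \<X>"

definition weak_top ::
    "'a measure \<Rightarrow> ('a \<Rightarrow> real) set \<Rightarrow> ('a \<Rightarrow> real) set \<Rightarrow> ('a \<Rightarrow> real) topology" where
  "weak_top M \<X> \<X>' = pullback_topology \<X>
      (\<lambda>X. restrict (\<lambda>Y. integral\<^sup>L M (\<lambda>\<omega>. X \<omega> * Y \<omega>)) \<X>')
      (product_topology (\<lambda>_. euclideanreal) \<X>')"

definition lsc_on :: "'b topology \<Rightarrow> ('b \<Rightarrow> ereal) \<Rightarrow> bool" where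
  "lsc_on T f \<longleftrightarrow> (\<forall>c. closedin T {x \<in> topspace T. f x \<le> c})"

definition convex_fun :: "('a \<Rightarrow> real) set \<Rightarrow> (('a \<Rightarrow> real) \<Rightarrow> ereal) \<Rightarrow> bool" where
  "convex_fun \<X> \<rho> \<longleftrightarrow> (\<forall>X\<in>\<X>. \<forall>Y\<in>\<X>. \<forall>l::real. 0 \<le> l \<and> l \<le> 1 \<longrightarrow>
      \<rho> (\<lambda>\<omega>. l * X \<omega> + (1 - l) * Y \<omega>) \<le> ereal l * \<rho> X + ereal (1 - l) * \<rho> Y)"

definition eligible_asset :: "'a measure \<Rightarrow> ('a \<Rightarrow> real) set \<Rightarrow> real \<Rightarrow> ('a \<Rightarrow> real) \<Rightarrow> bool" where
  "eligible_asset M \<X> S0 S1 \<longleftrightarrow> 0 < S0 \<and> S1 \<in> \<X> \<and> (AE \<omega> in M. S1 \<omega> \<ge> 0) \<and>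
      \<not> (AE \<omega> in M. S1 \<omega> = 0)"

definition risky :: "'a measure \<Rightarrow> ('a \<Rightarrow> real) \<Rightarrow> bool" where
  "risky M S1 \<longleftrightarrow> \<not> (\<exists>c. AE \<omega> in M. S1 \<omega> = c)"

definition S_additive_risk_measure ::
    "'a measure \<Rightarrow> ('a \<Rightarrow> real) set \<Rightarrow> real \<Rightarrow> ('a \<Rightarrow> real) \<Rightarrow> (('a \<Rightarrow> real) \<Rightarrow> ereal) \<Rightarrow> bool" where
  "S_additive_risk_measure M \<X> S0 S1 \<rho> \<longleftrightarrow>
     (\<forall>X\<in>\<X>. \<rho> X \<noteq> -\<infinity>) \<and>
     (\<forall>X\<in>\<X>. \<forall>m::real. \<rho> (\<lambda>\<omega>. X \<omega> + m * S1 \<omega>) = \<rho> X - ereal (m * S0)) \<and>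
     (\<forall>X\<in>\<X>. \<forall>Y\<in>\<X>. (AE \<omega> in M. X \<omega> \<ge> Y \<omega>) \<longrightarrow> \<rho> X \<le> \<rho> Y)"

abbreviation cash_additive_risk_measure ::
    "'a measure \<Rightarrow> ('a \<Rightarrow> real) set \<Rightarrow> (('a \<Rightarrow> real) \<Rightarrow> ereal) \<Rightarrow> bool" where
  "cash_additive_risk_measure M \<X> \<rho> \<equiv> S_additive_risk_measure M \<X> 1 (\<lambda>_. 1) \<rho>"

end

theory Submission
  imports Defs
begin

lemma fin_sep:
  fixes A :: "('i \<Rightarrow> real) set" and z :: "'i \<Rightarrow> real"
  assumes F: "finite F" and e: "\<epsilon> > 0" and Ane: "A \<noteq> {}"
    and far: "\<forall>a\<in>A. \<exists>i\<in>F. \<epsilon> \<le> \<bar>a i - z i\<bar>"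
    and cv: "\<forall>a\<in>A. \<forall>b\<in>A. \<forall>l::real. 0 \<le> l \<and> l \<le> 1 \<longrightarrow> (\<exists>c\<in>A. \<forall>i\<in>F. c i = l * a i + (1-l) * b i)"
  shows "\<exists>w \<delta>. \<delta> > 0 \<and> (\<forall>a\<in>A. (\<Sum>i\<in>F. w i * a i) + \<delta> \<le> (\<Sum>i\<in>F. w i * z i))"
proof -
  define d where "d a = (\<Sum>i\<in>F. (z i - a i)^2)" for a :: "'i \<Rightarrow> real"
  define \<delta> where "\<delta> = Inf (d ` A)"
  have bdd: "bdd_below (d ` A)"
  proof (rule bdd_belowI2)
    fix a show "0 \<le> d a" unfolding d_def by (intro sum_nonneg) simp
  qed
  have dge: "\<epsilon>^2 \<le> d a" if aA: "a \<in> A" for a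
  proof -
    obtain i where i: "i \<in> F" "\<epsilon> \<le> \<bar>a i - z i\<bar>" using far aA by blast
    have "\<epsilon>^2 \<le> (a i - z i)^2"
      using power_mono[OF i(2), of 2] e by simp
    also have "\<dots> = (z i - a i)^2" by (simp add: power2_commute)
    also have "\<dots> \<le> d a" unfolding d_def
      by (rule member_le_sum[OF i(1)]) (auto simp: F)
    finally show ?thesis .
  qed
  have dlow: "\<delta> \<le> d a" if "a \<in> A" for a
    unfolding \<delta>_def using bdd that by (auto intro: cInf_lower)
  have dpos: "\<epsilon>^2 \<le> \<delta>"
    unfolding \<delta>_def using Ane dge by (auto intro!: cInf_greatest)
  have "\<forall>n::nat. \<exists>a\<in>A. d a < \<delta> + 1 / (real n + 1)"
  proof
    fix n :: nat
    have "Inf (d ` A) < \<delta> + 1 / (real n + 1)" unfolding \<delta>_def by simp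
    then show "\<exists>a\<in>A. d a < \<delta> + 1 / (real n + 1)"
      using Ane bdd by (subst (asm) cInf_less_iff) auto
  qed
  then obtain s where sA: "\<And>n. s n \<in> A" and sd: "\<And>n. d (s n) < \<delta> + 1 / (real n + 1)"
    by metis
  have par: "(\<Sum>i\<in>F. (a i - b i)^2) \<le> 2 * (d a - \<delta>) + 2 * (d b - \<delta>)"
    if ab: "a \<in> A" "b \<in> A" for a b
  proof -
    have h: "0 \<le> (1/2::real) \<and> (1/2::real) \<le> 1" by simp
    obtain c where c: "c \<in> A" "\<forall>i\<in>F. c i = (1/2) * a i + (1 - 1/2) * b i"
      using cv ab h by blast
    have "(\<Sum>i\<in>F. (a i - b i)^2) = 2 * d a + 2 * d b - 4 * d c"
      unfolding d_def sum_distrib_left sum_subtractf[symmetric] sum.distrib[symmetric]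
      using c(2) by (intro sum.cong) (auto simp: power2_eq_square algebra_simps)
    then show ?thesis using dlow[OF c(1)] by simp
  qed
  have coord: "(s m i - s n i)^2 \<le> 2 / (real m + 1) + 2 / (real n + 1)" if "i \<in> F" for m n i
  proof -
    have "(s m i - s n i)^2 \<le> (\<Sum>j\<in>F. (s m j - s n j)^2)"
      by (rule member_le_sum[OF that]) (auto simp: F)
    also have "\<dots> \<le> 2 * (d (s m) - \<delta>) + 2 * (d (s n) - \<delta>)" using par sA by blast
    also have "\<dots> \<le> 2 / (real m + 1) + 2 / (real n + 1)" using sd[of m] sd[of n] by simp
    finally show ?thesis .
  qed
  have cau: "Cauchy (\<lambda>n. s n i)" if "i \<in> F" for i
  proof (rule metric_CauchyI)
    fix r :: real assume r: "r > 0"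
    obtain N :: nat where N: "4 / r^2 < real N" using reals_Archimedean2 by blast
    show "\<exists>M. \<forall>m\<ge>M. \<forall>n\<ge>M. dist (s m i) (s n i) < r"
    proof (intro exI allI impI)
      fix m n assume mn: "N \<le> m" "N \<le> n"
      have "4 / r^2 < real m + 1" "4 / r^2 < real n + 1" using N mn by linarith+
      then have "2 / (real m + 1) < r^2 / 2" "2 / (real n + 1) < r^2 / 2"
        using r by (auto simp: field_simps)
      then have "(s m i - s n i)^2 < r^2" using coord[OF that, of m n] by simp
      then show "dist (s m i) (s n i) < r" using r
        by (simp add: dist_real_def) (metis abs_le_square_iff abs_of_pos less_le_not_le linorder_not_le)
    qed
  qed
  define p where "p i = lim (\<lambda>n. s n i)" for i
  have sp: "(\<lambda>n. s n i) \<longlonglongrightarrow> p i" if "i \<in> F" for i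
    unfolding p_def using cau[OF that] by (simp add: Cauchy_convergent_iff convergent_LIMSEQ_iff)
  have inv: "(\<lambda>n. 1 / (real n + 1)) \<longlonglongrightarrow> 0"
    using LIMSEQ_inverse_real_of_nat by (simp add: inverse_eq_divide add.commute)
  have d1: "(\<lambda>n. d (s n)) \<longlonglongrightarrow> d p"
    unfolding d_def by (intro tendsto_intros sp)
  have d2: "(\<lambda>n. d (s n)) \<longlonglongrightarrow> \<delta>"
  proof (rule real_tendsto_sandwich[where f="\<lambda>_. \<delta>" and h="\<lambda>n. \<delta> + 1 / (real n + 1)"])
    show "\<forall>\<^sub>F n in sequentially. \<delta> \<le> d (s n)" using dlow sA by (intro always_eventually allI) blast
    show "\<forall>\<^sub>F n in sequentially. d (s n) \<le> \<delta> + 1 / (real n + 1)" using sd by (intro always_eventually allI less_imp_le)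
    show "(\<lambda>n. \<delta>) \<longlonglongrightarrow> \<delta>" by simp
    show "(\<lambda>n. \<delta> + 1 / (real n + 1)) \<longlonglongrightarrow> \<delta>" using tendsto_add[OF tendsto_const inv] by simp
  qed
  have dp: "d p = \<delta>" using LIMSEQ_unique[OF d1 d2] .
  define w where "w i = z i - p i" for i
  have key: "(\<Sum>i\<in>F. w i * (a i - p i)) \<le> 0" if aA: "a \<in> A" for a
  proof -
    define L where "L = (\<Sum>i\<in>F. w i * (a i - p i))"
    define R where "R = (\<Sum>i\<in>F. (a i - p i)^2)"
    have R0: "R \<ge> 0" unfolding R_def by (auto intro: sum_nonneg)
    have tb: "2 * L \<le> t * R" if t: "0 < t" "t \<le> 1" for t
    proof -
      have "\<forall>n. \<exists>c\<in>A. \<forall>i\<in>F. c i = t * a i + (1 - t) * s n i" using cv aA sA t by auto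
      then obtain c where cA: "\<And>n. c n \<in> A" and cc: "\<And>n i. i \<in> F \<Longrightarrow> c n i = t * a i + (1 - t) * s n i"
        by metis
      have "(\<lambda>n. d (c n)) = (\<lambda>n. \<Sum>i\<in>F. (z i - (t * a i + (1 - t) * s n i))^2)"
        unfolding d_def using cc by (auto intro!: sum.cong)
      moreover have "(\<lambda>n. \<Sum>i\<in>F. (z i - (t * a i + (1 - t) * s n i))^2) \<longlonglongrightarrow>
          (\<Sum>i\<in>F. (z i - (t * a i + (1 - t) * p i))^2)"
        by (intro tendsto_intros sp)
      ultimately have lim: "(\<lambda>n. d (c n)) \<longlonglongrightarrow> (\<Sum>i\<in>F. (z i - (t * a i + (1 - t) * p i))^2)" by simp
      have ge: "\<delta> \<le> (\<Sum>i\<in>F. (z i - (t * a i + (1 - t) * p i))^2)"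
        by (rule LIMSEQ_le_const[OF lim]) (use dlow cA in auto)
      have "(\<Sum>i\<in>F. (z i - (t * a i + (1 - t) * p i))^2) = d p - 2 * t * L + t^2 * R"
        unfolding d_def L_def R_def w_def sum_distrib_left sum_subtractf[symmetric] sum.distrib[symmetric]
        by (intro sum.cong) (auto simp: power2_eq_square algebra_simps)
      then have "0 \<le> - 2 * t * L + t^2 * R" using ge dp by simp
      then have "t * (2 * L) \<le> t * (t * R)" by (simp add: power2_eq_square algebra_simps)
      then show ?thesis using t by simp
    qed
    show ?thesis
    proof (rule ccontr)
      assume "\<not> ?thesis"
      then have Lp: "L > 0" unfolding L_def by simp
      define t where "t = min 1 (L / (R + 1))"
      have t0: "0 < t" "t \<le> 1" using Lp R0 by (auto simp: t_def)
      have "t * R \<le> L / (R + 1) * R" using R0 by (intro mult_right_mono) (auto simp: t_def)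
      also have "\<dots> < L" using Lp R0 by (simp add: field_simps)
      finally show False using tb[OF t0] Lp by simp
    qed
  qed
  show ?thesis
  proof (intro exI conjI ballI)
    show "\<delta> > 0" using dpos e by (smt (verit) zero_less_power)
    fix a assume aA: "a \<in> A"
    have "(\<Sum>i\<in>F. w i * z i) - (\<Sum>i\<in>F. w i * a i) = (\<Sum>i\<in>F. w i * (p i - a i)) + d p"
      unfolding d_def w_def sum_subtractf[symmetric] sum.distrib[symmetric]
      by (intro sum.cong) (auto simp: power2_eq_square algebra_simps)
    moreover have "(\<Sum>i\<in>F. w i * (p i - a i)) \<ge> 0"
    proof -
      have "(\<Sum>i\<in>F. w i * (p i - a i)) = - (\<Sum>i\<in>F. w i * (a i - p i))"
        by (simp add: sum_negf[symmetric] algebra_simps)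
      then show ?thesis using key[OF aA] by simp
    qed
    ultimately show "(\<Sum>i\<in>F. w i * a i) + \<delta> \<le> (\<Sum>i\<in>F. w i * z i)" using dp by simp
  qed
qed

lemma topspace_weak_top: "topspace (weak_top M X X') = X"
  by (auto simp: weak_top_def topspace_pullback_topology)

lemma weak_nbhd:
  assumes cl: "closedin (weak_top M XX X') K" and Z: "Z \<in> XX" "Z \<notin> K"
  shows "\<exists>F \<epsilon>. finite F \<and> F \<subseteq> X' \<and> \<epsilon> > 0 \<and>
     (\<forall>W\<in>K. \<exists>Y\<in>F. \<epsilon> \<le> \<bar>integral\<^sup>L M (\<lambda>\<omega>. W \<omega> * Y \<omega>) - integral\<^sup>L M (\<lambda>\<omega>. Z \<omega> * Y \<omega>)\<bar>)"
proof -
  define g where "g = (\<lambda>X. restrict (\<lambda>Y. integral\<^sup>L M (\<lambda>\<omega>. X \<omega> * Y \<omega>)) X')"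
  have KX: "K \<subseteq> XX" using closedin_subset[OF cl] by (simp add: topspace_weak_top)
  have "openin (weak_top M XX X') (topspace (weak_top M XX X') - K)"
    using cl by (simp add: closedin_def)
  then have "openin (weak_top M XX X') (XX - K)" by (simp add: topspace_weak_top)
  then obtain U where U: "openin (product_topology (\<lambda>_. euclideanreal) X') U"
      and UK: "XX - K = g -` U \<inter> XX"
    unfolding weak_top_def openin_pullback_topology g_def by blast
  have gZU: "g Z \<in> U" using Z UK by blast
  have "\<forall>x \<in> U. \<exists>V. finite {i \<in> X'. V i \<noteq> topspace euclideanreal} \<and>
                 (\<forall>i \<in> X'. openin euclideanreal (V i)) \<and> x \<in> Pi\<^sub>E X' V \<and> Pi\<^sub>E X' V \<subseteq> U"
    using U by (subst (asm) openin_product_topology_alt)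
  from bspec[OF this gZU] obtain V where Vfin: "finite {i \<in> X'. V i \<noteq> topspace euclideanreal}"
      and Vop: "\<forall>i\<in>X'. openin euclideanreal (V i)" and gZ: "g Z \<in> Pi\<^sub>E X' V"
      and VU: "Pi\<^sub>E X' V \<subseteq> U"
    by (elim exE conjE)
  define F where "F = {i \<in> X'. V i \<noteq> UNIV}"
  have Ffin: "finite F" using Vfin by (simp add: F_def)
  have "\<forall>Y\<in>F. \<exists>e>0. \<forall>y. \<bar>y - integral\<^sup>L M (\<lambda>\<omega>. Z \<omega> * Y \<omega>)\<bar> < e \<longrightarrow> y \<in> V Y"
  proof
    fix Y assume YF: "Y \<in> F"
    then have YX': "Y \<in> X'" by (simp add: F_def)
    have "open (V Y)" using Vop YX' by simp
    moreover have "integral\<^sup>L M (\<lambda>\<omega>. Z \<omega> * Y \<omega>) \<in> V Y"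
      using gZ YX' by (auto simp: g_def PiE_iff)
    ultimately obtain e where "e > 0" "\<forall>y. dist y (integral\<^sup>L M (\<lambda>\<omega>. Z \<omega> * Y \<omega>)) < e \<longrightarrow> y \<in> V Y"
      unfolding open_dist by blast
    then show "\<exists>e>0. \<forall>y. \<bar>y - integral\<^sup>L M (\<lambda>\<omega>. Z \<omega> * Y \<omega>)\<bar> < e \<longrightarrow> y \<in> V Y"
      by (auto simp: dist_real_def)
  qed
  then obtain e where e: "\<And>Y. Y \<in> F \<Longrightarrow> e Y > 0"
    and eV: "\<And>Y y. Y \<in> F \<Longrightarrow> \<bar>y - integral\<^sup>L M (\<lambda>\<omega>. Z \<omega> * Y \<omega>)\<bar> < e Y \<Longrightarrow> y \<in> V Y"
    by metis
  define \<epsilon> where "\<epsilon> = Min (insert 1 (e ` F))"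
  have epos: "\<epsilon> > 0" unfolding \<epsilon>_def using Ffin e by (subst Min_gr_iff) auto
  have ele: "\<epsilon> \<le> e Y" if "Y \<in> F" for Y
    unfolding \<epsilon>_def using Ffin that by (intro Min_le) auto
  show ?thesis
  proof (intro exI conjI ballI)
    show "finite F" "F \<subseteq> X'" "\<epsilon> > 0" using Ffin epos by (auto simp: F_def)
    fix W assume WK: "W \<in> K"
    show "\<exists>Y\<in>F. \<epsilon> \<le> \<bar>integral\<^sup>L M (\<lambda>\<omega>. W \<omega> * Y \<omega>) - integral\<^sup>L M (\<lambda>\<omega>. Z \<omega> * Y \<omega>)\<bar>"
    proof (rule ccontr)
      assume "\<not> ?thesis"
      then have close: "\<And>Y. Y \<in> F \<Longrightarrow> \<bar>integral\<^sup>L M (\<lambda>\<omega>. W \<omega> * Y \<omega>) - integral\<^sup>L M (\<lambda>\<omega>. Z \<omega> * Y \<omega>)\<bar> < e Y"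
        using ele by force
      have "g W \<in> Pi\<^sub>E X' V"
      proof (unfold PiE_iff, intro conjI ballI)
        fix Y assume YX': "Y \<in> X'"
        show "g W Y \<in> V Y"
        proof (cases "Y \<in> F")
          case True then show ?thesis using eV[OF True close[OF True]] YX' by (simp add: g_def)
        next
          case False then show ?thesis using YX' by (simp add: F_def)
        qed
      next
        show "g W \<in> extensional X'" by (simp add: g_def)
      qed
      then have "W \<in> XX - K" using VU UK KX WK by blast
      then show False using WK by blast
    qed
  qed
qed

lemma weak_sep:
  fixes M :: "'a measure"
  assumes adm: "admissible_space M X'" and pint: "\<forall>X\<in>XX. \<forall>Y\<in>X'. integrable M (\<lambda>\<omega>. X \<omega> * Y \<omega>)"
    and KX: "K \<subseteq> XX" and cl: "closedin (weak_top M XX X') K" and Z: "Z \<in> XX" "Z \<notin> K" and Kne: "K \<noteq> {}"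
    and cvK: "\<forall>W1\<in>K. \<forall>W2\<in>K. \<forall>l::real. 0 \<le> l \<and> l \<le> 1 \<longrightarrow> (\<lambda>\<omega>. l * W1 \<omega> + (1-l) * W2 \<omega>) \<in> K"
  shows "\<exists>Y\<in>X'. \<exists>\<alpha>. \<alpha> < integral\<^sup>L M (\<lambda>\<omega>. Z \<omega> * Y \<omega>) \<and> (\<forall>W\<in>K. integral\<^sup>L M (\<lambda>\<omega>. W \<omega> * Y \<omega>) \<le> \<alpha>)"
proof -
  obtain F \<epsilon> where F: "finite F" "F \<subseteq> X'" and e: "\<epsilon> > 0"
    and far0: "\<forall>W\<in>K. \<exists>Y\<in>F. \<epsilon> \<le> \<bar>integral\<^sup>L M (\<lambda>\<omega>. W \<omega> * Y \<omega>) - integral\<^sup>L M (\<lambda>\<omega>. Z \<omega> * Y \<omega>)\<bar>"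
    using weak_nbhd[OF cl Z] by blast
  define T where "T = (\<lambda>(W::'a \<Rightarrow> real). \<lambda>(Y::'a \<Rightarrow> real). integral\<^sup>L M (\<lambda>\<omega>. W \<omega> * Y \<omega>))"
  have far: "\<forall>a\<in>T ` K. \<exists>i\<in>F. \<epsilon> \<le> \<bar>a i - T Z i\<bar>" using far0 by (auto simp: T_def)
  have cv: "\<forall>a\<in>T ` K. \<forall>b\<in>T ` K. \<forall>l::real. 0 \<le> l \<and> l \<le> 1 \<longrightarrow> (\<exists>c\<in>T ` K. \<forall>i\<in>F. c i = l * a i + (1-l) * b i)"
  proof (intro ballI allI impI)
    fix a b and l :: real assume a: "a \<in> T ` K" and b: "b \<in> T ` K" and l: "0 \<le> l \<and> l \<le> 1"
    obtain W1 where W1: "W1 \<in> K" "a = T W1" using a by blast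
    obtain W2 where W2: "W2 \<in> K" "b = T W2" using b by blast
    have "(\<lambda>\<omega>. l * W1 \<omega> + (1-l) * W2 \<omega>) \<in> K" using cvK W1 W2 l by blast
    moreover have "\<forall>i\<in>F. T (\<lambda>\<omega>. l * W1 \<omega> + (1-l) * W2 \<omega>) i = l * a i + (1-l) * b i"
    proof
      fix i assume iF: "i \<in> F"
      have i1: "integrable M (\<lambda>\<omega>. W1 \<omega> * i \<omega>)" and i2: "integrable M (\<lambda>\<omega>. W2 \<omega> * i \<omega>)"
        using pint W1 W2 KX iF F by blast+
      have "(\<lambda>\<omega>. (l * W1 \<omega> + (1-l) * W2 \<omega>) * i \<omega>) = (\<lambda>\<omega>. l * (W1 \<omega> * i \<omega>) + (1-l) * (W2 \<omega> * i \<omega>))"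
        by (auto simp: algebra_simps)
      then show "T (\<lambda>\<omega>. l * W1 \<omega> + (1-l) * W2 \<omega>) i = l * a i + (1-l) * b i"
        using i1 i2 W1 W2 by (simp add: T_def)
    qed
    ultimately show "\<exists>c\<in>T ` K. \<forall>i\<in>F. c i = l * a i + (1-l) * b i" by blast
  qed
  obtain w \<delta> where d: "\<delta> > 0" and sep: "\<forall>a\<in>T ` K. (\<Sum>i\<in>F. w i * a i) + \<delta> \<le> (\<Sum>i\<in>F. w i * T Z i)"
    using fin_sep[OF F(1) e _ far cv] Kne by blast
  define Y where "Y = (\<lambda>\<omega>. \<Sum>i\<in>F. w i * i \<omega>)"
  note adm' = adm[unfolded admissible_space_def]
  have Xadd: "\<And>X Y. X \<in> X' \<Longrightarrow> Y \<in> X' \<Longrightarrow> (\<lambda>\<omega>. X \<omega> + Y \<omega>) \<in> X'" using adm' by blast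
  have Xsc: "\<And>X c. X \<in> X' \<Longrightarrow> (\<lambda>\<omega>. c * X \<omega>) \<in> X'" using adm' by blast
  have X0: "(\<lambda>_. 0) \<in> X'" using adm' by blast
  have YX': "Y \<in> X'"
  proof -
    have "\<forall>G. G \<subseteq> F \<longrightarrow> (\<lambda>\<omega>. \<Sum>i\<in>G. w i * i \<omega>) \<in> X'"
    proof (intro allI impI)
      fix G assume "G \<subseteq> F"
      then have "finite G" "G \<subseteq> X'" using F finite_subset by blast+
      then show "(\<lambda>\<omega>. \<Sum>i\<in>G. w i * i \<omega>) \<in> X'"
      proof (induction G rule: finite_induct)
        case empty then show ?case using X0 by simp
      next
        case (insert x G)
        have "(\<lambda>\<omega>. w x * x \<omega>) \<in> X'" using insert Xsc by blast
        moreover have "(\<lambda>\<omega>. \<Sum>i\<in>G. w i * i \<omega>) \<in> X'" using insert by blast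
        ultimately have "(\<lambda>\<omega>. w x * x \<omega> + (\<Sum>i\<in>G. w i * i \<omega>)) \<in> X'" by (rule Xadd)
        then show ?case using insert by simp
      qed
    qed
    then show ?thesis unfolding Y_def by blast
  qed
  have TY: "integral\<^sup>L M (\<lambda>\<omega>. W \<omega> * Y \<omega>) = (\<Sum>i\<in>F. w i * T W i)" if "W \<in> XX" for W
  proof -
    have "(\<lambda>\<omega>. W \<omega> * Y \<omega>) = (\<lambda>\<omega>. \<Sum>i\<in>F. w i * (W \<omega> * i \<omega>))"
      unfolding Y_def by (auto simp: sum_distrib_left algebra_simps)
    moreover have "integral\<^sup>L M (\<lambda>\<omega>. \<Sum>i\<in>F. w i * (W \<omega> * i \<omega>)) = (\<Sum>i\<in>F. w i * T W i)"
    proof -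
      have "integral\<^sup>L M (\<lambda>\<omega>. \<Sum>i\<in>F. w i * (W \<omega> * i \<omega>)) = (\<Sum>i\<in>F. integral\<^sup>L M (\<lambda>\<omega>. w i * (W \<omega> * i \<omega>)))"
      proof (rule Bochner_Integration.integral_sum[where I=F and f="\<lambda>i \<omega>. w i * (W \<omega> * i \<omega>)"])
        fix i assume "i \<in> F"
        then have "integrable M (\<lambda>\<omega>. W \<omega> * i \<omega>)" using pint that F by blast
        then show "integrable M (\<lambda>\<omega>. w i * (W \<omega> * i \<omega>))" by simp
      qed
      then show ?thesis unfolding T_def by simp
    qed
    ultimately show ?thesis by simp
  qed
  show ?thesis
  proof (intro bexI exI conjI ballI)
    show "Y \<in> X'" by fact
    show "(\<Sum>i\<in>F. w i * T Z i) - \<delta> < integral\<^sup>L M (\<lambda>\<omega>. Z \<omega> * Y \<omega>)"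
      using TY[OF Z(1)] d by simp
    fix W assume WK: "W \<in> K"
    show "integral\<^sup>L M (\<lambda>\<omega>. W \<omega> * Y \<omega>) \<le> (\<Sum>i\<in>F. w i * T Z i) - \<delta>"
      using TY[of W] WK KX sep by force
  qed
qed

context prob_space
begin

lemma small_subset:
  assumes na: "nonatomic M" and A: "A \<in> sets M" "measure M A > 0" and e: "e > 0"
  shows "\<exists>B\<in>sets M. B \<subseteq> A \<and> 0 < measure M B \<and> measure M B < e"
proof -
  have step: "\<exists>B\<in>sets M. B \<subseteq> A \<and> 0 < measure M B \<and> measure M B \<le> measure M A / 2^n" for n
  proof (induction n)
    case 0 then show ?case using A by auto
  next
    case (Suc n)
    then obtain B where B: "B \<in> sets M" "B \<subseteq> A" "0 < measure M B" "measure M B \<le> measure M A / 2^n"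
      by blast
    obtain C where C: "C \<in> sets M" "C \<subseteq> B" "0 < measure M C" "measure M C < measure M B"
      using na B unfolding nonatomic_def by blast
    have BC: "measure M (B - C) = measure M B - measure M C"
      using finite_measure_Diff[OF B(1) C(1) C(2)] .
    show ?case
    proof (cases "measure M C \<le> measure M B / 2")
      case True
      have "measure M B / 2 \<le> measure M A / 2^n / 2" by (rule divide_right_mono[OF B(4)]) simp
      then have "measure M C \<le> measure M A / 2^n / 2" using True by linarith
      then have "measure M C \<le> measure M A / 2^Suc n" by simp
      then show ?thesis using C B by (intro bexI[of _ C]) auto
    next
      case False
      have "measure M B / 2 \<le> measure M A / 2^n / 2" by (rule divide_right_mono[OF B(4)]) simp
      then have "measure M (B - C) \<le> measure M A / 2^n / 2" using False BC by linarith
      then have "measure M (B - C) \<le> measure M A / 2^Suc n" by simp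
      moreover have "B - C \<in> sets M" using B C by auto
      ultimately show ?thesis using C B BC by (intro bexI[of _ "B - C"]) auto
    qed
  qed
  obtain n :: nat where n: "1 / e < real n" using reals_Archimedean2 by blast
  have "real n < real (2^n)" using less_exp[of n] by (simp only: of_nat_less_iff)
  then have "real n < 2^n" by simp
  then have "1 / e < 2^n" using n by linarith
  then have "1 / 2^n < e" using e by (simp add: field_simps)
  moreover have "measure M A / 2^n \<le> 1 / 2^n"
    by (rule divide_right_mono[OF prob_le_1]) simp
  moreover obtain B where "B\<in>sets M" "B \<subseteq> A" "0 < measure M B" "measure M B \<le> measure M A / 2^n"
    using step[of n] by (elim bexE conjE)
  ultimately show ?thesis by (intro bexI[of _ B] conjI) auto
qed

lemma sierpinski:
  assumes na: "nonatomic M" and A: "A \<in> sets M" and t: "0 \<le> t" "t \<le> measure M A"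
  shows "\<exists>B\<in>sets M. B \<subseteq> A \<and> measure M B = t"
proof -
  define adm where "adm E F \<longleftrightarrow> F \<in> sets M \<and> F \<subseteq> A - E \<and> measure M E + measure M F \<le> t" for E F
  define s where "s E = Sup (measure M ` {F. adm E F})" for E
  define pick where "pick E = (SOME F. adm E F \<and> s E \<le> 2 * measure M F)" for E
  have bddS: "bdd_above (measure M ` {F. adm E F})" for E
    by (rule bdd_aboveI2[of _ _ 1]) simp
  have pk: "adm E (pick E) \<and> s E \<le> 2 * measure M (pick E)"
    if E: "E \<in> sets M" "E \<subseteq> A" "measure M E \<le> t" for E
  proof -
    have ex: "\<exists>F. adm E F \<and> s E \<le> 2 * measure M F"
    proof (cases "s E \<le> 0")
      case True
      then show ?thesis using E by (intro exI[of _ "{}"]) (auto simp: adm_def)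
    next
      case False
      have ne: "measure M ` {F. adm E F} \<noteq> {}" using E by (auto simp: adm_def intro!: image_eqI[of _ _ "{}"])
      have "s E / 2 < Sup (measure M ` {F. adm E F})" using False by (simp add: s_def)
      then obtain x where "x \<in> measure M ` {F. adm E F}" "s E / 2 < x"
        using less_cSup_iff[OF ne bddS] by blast
      then show ?thesis by auto
    qed
    show ?thesis unfolding pick_def using someI_ex[OF ex] .
  qed
  define E where "E = rec_nat {} (\<lambda>_ X. X \<union> pick X)"
  have E0: "E 0 = {}" and ES: "\<And>n. E (Suc n) = E n \<union> pick (E n)" by (simp_all add: E_def)
  have inv: "E n \<in> sets M \<and> E n \<subseteq> A \<and> measure M (E n) \<le> t" for n
  proof (induction n)
    case 0 then show ?case using t by (simp add: E0)
  next
    case (Suc n)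
    then have p: "adm (E n) (pick (E n))" using pk by blast
    then have "measure M (E n \<union> pick (E n)) = measure M (E n) + measure M (pick (E n))"
      using Suc by (intro finite_measure_Union) (auto simp: adm_def)
    then show ?case using Suc p by (auto simp: ES adm_def)
  qed
  have mstep: "measure M (E (Suc n)) = measure M (E n) + measure M (pick (E n))" for n
    using pk[of "E n"] inv[of n] unfolding ES by (intro finite_measure_Union) (auto simp: adm_def)
  define L where "L = (\<Union>n. E n)"
  have inc: "incseq E" by (rule incseq_SucI) (simp add: ES)
  have Lsets: "L \<in> sets M" using inv by (auto simp: L_def)
  have LA: "L \<subseteq> A" using inv by (auto simp: L_def)
  have lim: "(\<lambda>n. measure M (E n)) \<longlonglongrightarrow> measure M L"
    unfolding L_def using inv inc by (intro finite_Lim_measure_incseq) auto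
  have Lt: "measure M L \<le> t"
    by (rule LIMSEQ_le_const2[OF lim]) (use inv in auto)
  have p0: "(\<lambda>n. measure M (pick (E n))) \<longlonglongrightarrow> 0"
  proof -
    have "(\<lambda>n. measure M (E (Suc n)) - measure M (E n)) \<longlonglongrightarrow> measure M L - measure M L"
      by (intro tendsto_diff LIMSEQ_Suc lim)
    then show ?thesis using mstep by simp
  qed
  show ?thesis
  proof (rule bexI[of _ L], intro conjI)
    show "L \<subseteq> A" by fact
    show "L \<in> sets M" by fact
    show "measure M L = t"
    proof (rule ccontr)
      assume "measure M L \<noteq> t"
      then have Llt: "measure M L < t" using Lt by simp
      have "measure M (A - L) = measure M A - measure M L" using finite_measure_Diff[OF A Lsets LA] .
      then have "measure M (A - L) > 0" using Llt t by simp
      moreover have "A - L \<in> sets M" using A Lsets by auto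
      moreover have "t - measure M L > 0" using Llt by simp
      ultimately have "\<exists>B\<in>sets M. B \<subseteq> A - L \<and> 0 < measure M B \<and> measure M B < t - measure M L"
        by (intro small_subset[OF na])
      then obtain G where G: "G \<in> sets M" "G \<subseteq> A - L" "0 < measure M G" "measure M G < t - measure M L"
        by (elim bexE conjE)
      have "measure M G \<le> s (E n)" for n
      proof -
        have En: "E n \<subseteq> L" by (auto simp: L_def)
        have "measure M (E n) \<le> measure M L" using En Lsets by (rule finite_measure_mono)
        then have "adm (E n) G" using G En by (auto simp: adm_def)
        then show ?thesis unfolding s_def by (intro cSup_upper bddS) auto
      qed
      then have le: "measure M G \<le> 2 * measure M (pick (E n))" for n
        using pk[of "E n"] inv[of n] by (meson order_trans)
      have "eventually (\<lambda>n. measure M (pick (E n)) < measure M G / 2) sequentially"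
        using p0 G(3) by (intro order_tendstoD) auto
      then obtain n where "measure M (pick (E n)) < measure M G / 2" by (auto dest: eventually_happens)
      then show False using le[of n] by simp
    qed
  qed
qed

end

context prob_space
begin

lemma sum_lt_indicator:
  assumes "k \<le> N"
  shows "(\<Sum>j<N. (if j < k then 1 else 0 :: real)) = real k"
proof -
  have "(\<Sum>j<N. (if j < k then 1 else 0 :: real)) = (\<Sum>j\<in>{..<N} \<inter> {j. j < k}. 1)"
    by (simp add: sum.If_cases)
  also have "{..<N} \<inter> {j. j < k} = {..<k}" using assms by auto
  finally show ?thesis by simp
qed

lemma aux_low: assumes "(p::real) > 0" "s * p - 1 < f" shows "s - 1 / p \<le> f / p"
proof -
  have "(s * p - 1) / p \<le> f / p" using assms by (intro divide_right_mono) auto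
  moreover have "(s * p - 1) / p = s - 1 / p" using assms by (simp add: diff_divide_distrib)
  ultimately show ?thesis by simp
qed

lemma aux_up: assumes "(p::real) > 0" "f \<le> s * p" shows "f / p \<le> s"
  using assms by (simp add: pos_divide_le_eq)

lemma sub_uniform_raw:
  assumes na: "nonatomic M" and B: "B \<in> sets M" "measure M B > 0"
  shows "\<exists>U\<in>borel_measurable M. (\<forall>t. 0 \<le> t \<longrightarrow> t \<le> 1 \<longrightarrow> measure M (B \<inter> {\<omega>\<in>space M. U \<omega> \<le> t}) = t * measure M B)
     \<and> (B \<inter> {\<omega>\<in>space M. U \<omega> \<le> 0 \<or> 1 \<le> U \<omega>}) \<in> null_sets M"
proof -
  define half where "half E = (SOME H. H \<in> sets M \<and> H \<subseteq> E \<and> measure M H = measure M E / 2)" for E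
  have half: "half E \<in> sets M \<and> half E \<subseteq> E \<and> measure M (half E) = measure M E / 2" if E: "E \<in> sets M" for E
  proof -
    have "\<exists>H\<in>sets M. H \<subseteq> E \<and> measure M H = measure M E / 2"
      by (rule sierpinski[OF na E]) auto
    then have "\<exists>H. H \<in> sets M \<and> H \<subseteq> E \<and> measure M H = measure M E / 2" by blast
    from someI_ex[OF this] show ?thesis unfolding half_def .
  qed
  define G where "G = rec_nat (\<lambda>j::nat. if j = 0 then {} else B)
     (\<lambda>n Gn j. if even j then Gn (j div 2) else Gn (j div 2) \<union> half (Gn (j div 2 + 1) - Gn (j div 2)))"
  have G0: "G 0 j = (if j = 0 then {} else B)" for j by (simp add: G_def)
  have GS: "G (Suc n) j = (if even j then G n (j div 2) else G n (j div 2) \<union> half (G n (j div 2 + 1) - G n (j div 2)))" for n j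
    by (simp add: G_def)
  have Gsets: "G n j \<in> sets M \<and> G n j \<subseteq> B" for n j
  proof (induction n arbitrary: j)
    case 0 then show ?case using B by (simp add: G0)
  next
    case (Suc n)
    have D: "G n (j div 2 + 1) - G n (j div 2) \<in> sets M" using Suc by auto
    show ?case using Suc half[OF D] by (auto simp: GS)
  qed
  have Gm1: "G n j \<subseteq> G n (Suc j)" for n j
  proof (induction n arbitrary: j)
    case 0 then show ?case by (simp add: G0)
  next
    case (Suc n)
    show ?case
    proof (cases "even j")
      case True
      then have "Suc j div 2 = j div 2" "\<not> even (Suc j)" by auto
      then show ?thesis using True by (simp add: GS)
    next
      case False
      then have e: "Suc j div 2 = j div 2 + 1" "even (Suc j)" by (auto elim: oddE)
      have D: "G n (j div 2 + 1) - G n (j div 2) \<in> sets M" using Gsets by auto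
      have "half (G n (j div 2 + 1) - G n (j div 2)) \<subseteq> G n (j div 2 + 1)" using half[OF D] by auto
      moreover have "G n (j div 2) \<subseteq> G n (j div 2 + 1)" using Suc by simp
      ultimately show ?thesis using False e by (simp add: GS)
    qed
  qed
  have Gmono: "j \<le> j' \<Longrightarrow> G n j \<subseteq> G n j'" for n j j'
    using lift_Suc_mono_le[of "G n", OF Gm1] by blast
  have Gtop: "G n (2^n) = B" for n
    by (induction n) (auto simp: G0 GS)
  have Gbot: "G n 0 = {}" for n
    by (induction n) (auto simp: G0 GS)
  have G2: "G (Suc n) (2 * j) = G n j" for n j by (simp add: GS)
  have Gmeas: "j \<le> 2^n \<Longrightarrow> measure M (G n j) = real j / 2^n * measure M B" for n j
  proof (induction n arbitrary: j)
    case 0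
    then have "j = 0 \<or> j = 1" by auto
    then show ?case by (auto simp: G0)
  next
    case (Suc n)
    show ?case
    proof (cases "even j")
      case True
      then obtain i where i: "j = 2 * i" by (auto elim: evenE)
      then have "i \<le> 2^n" using Suc.prems by simp
      then show ?thesis using Suc.IH[of i] i by (simp add: G2)
    next
      case False
      then obtain i where i: "j = 2 * i + 1" by (auto elim: oddE)
      have "2 * i + 1 \<le> 2 * 2^n" using Suc.prems i by simp
      then have i1: "i + 1 \<le> 2^n" by presburger
      have jd: "j div 2 = i" using i by simp
      define D where "D = G n (i + 1) - G n i"
      have Dsets: "D \<in> sets M" using Gsets by (auto simp: D_def)
      have mD: "measure M D = measure M B / 2^n"
      proof -
        have "measure M D = measure M (G n (i+1)) - measure M (G n i)"
          unfolding D_def using Gsets Gmono[of i "i+1" n] by (intro finite_measure_Diff) auto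
        also have "\<dots> = real (i+1) / 2^n * measure M B - real i / 2^n * measure M B"
          using Suc.IH[of "i+1"] Suc.IH[of i] i1 by simp
        also have "\<dots> = measure M B / 2^n" by (simp add: field_simps)
        finally show ?thesis .
      qed
      have "measure M (G (Suc n) j) = measure M (G n i \<union> half D)"
        using False jd by (simp add: GS D_def)
      also have "\<dots> = measure M (G n i) + measure M (half D)"
        using half[OF Dsets] Gsets by (intro finite_measure_Union) (auto simp: D_def)
      also have "\<dots> = real i / 2^n * measure M B + measure M B / 2^n / 2"
        using Suc.IH[of i] i1 half[OF Dsets] mD by simp
      also have "\<dots> = real j / 2^Suc n * measure M B" using i by (simp add: field_simps)
      finally show ?thesis .
    qed
  qed
  define k where "k n \<omega> = (LEAST j. \<omega> \<in> G n j)" for n \<omega>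
  have kprop: "k n \<omega> \<le> 2^n \<and> (\<forall>j. \<omega> \<in> G n j \<longleftrightarrow> k n \<omega> \<le> j)" if \<omega>: "\<omega> \<in> B" for n \<omega>
  proof -
    have top: "\<omega> \<in> G n (2^n)" using \<omega> Gtop by simp
    have kin: "\<omega> \<in> G n (k n \<omega>)" unfolding k_def by (rule LeastI[of "\<lambda>j. \<omega> \<in> G n j" "2^n", OF top])
    have "\<omega> \<in> G n j \<longleftrightarrow> k n \<omega> \<le> j" for j
      using Gmono[of "k n \<omega>" j n] kin Least_le[of "\<lambda>j. \<omega> \<in> G n j" j] unfolding k_def by auto
    moreover have "k n \<omega> \<le> 2^n" unfolding k_def by (rule Least_le[of "\<lambda>j. \<omega> \<in> G n j" "2^n", OF top])
    ultimately show ?thesis by blast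
  qed
  have kpos: "1 \<le> k n \<omega>" if "\<omega> \<in> B" for n \<omega>
    using kprop[OF that, of n] Gbot[of n] by (cases "k n \<omega>") auto
  define V where "V n \<omega> = (\<Sum>j<2^n. indicator (space M - G n j) \<omega>) / (2::real)^n" for n \<omega>
  have Vmeas: "V n \<in> borel_measurable M" for n
  proof -
    have "(\<lambda>\<omega>. indicator (space M - G n j) \<omega> :: real) \<in> borel_measurable M" for j
      using Gsets[of n j] by (intro borel_measurable_indicator) auto
    then have "(\<lambda>\<omega>. \<Sum>j<2^n. indicator (space M - G n j) \<omega> :: real) \<in> borel_measurable M"
      by (intro borel_measurable_sum)
    then show ?thesis unfolding V_def by simp
  qed
  have Vk: "V n \<omega> = real (k n \<omega>) / 2^n" if \<omega>: "\<omega> \<in> B" for n \<omega>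
  proof -
    have sp: "\<omega> \<in> space M" using \<omega> B sets.sets_into_space by blast
    have "(\<Sum>j<2^n. indicator (space M - G n j) \<omega> :: real) = (\<Sum>j<2^n. (if j < k n \<omega> then 1 else 0))"
      using kprop[OF \<omega>, of n] sp by (intro sum.cong) (auto simp: indicator_def)
    also have "\<dots> = real (k n \<omega>)" using kprop[OF \<omega>, of n] by (intro sum_lt_indicator) auto
    finally show ?thesis unfolding V_def by simp
  qed
  have Vout: "V n \<omega> = V 0 \<omega>" if \<omega>: "\<omega> \<notin> B" for n \<omega>
  proof (cases "\<omega> \<in> space M")
    case True
    have "(\<Sum>j<2^n. indicator (space M - G n j) \<omega> :: real) = (\<Sum>j<(2::nat)^n. (1::real))"
      using True \<omega> Gsets by (intro sum.cong) (auto simp: indicator_def)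
    then have "V n \<omega> = 1" unfolding V_def by simp
    moreover have "V 0 \<omega> = 1" unfolding V_def using True by (simp add: G0 indicator_def)
    ultimately show ?thesis by simp
  next
    case False
    then show ?thesis unfolding V_def by (simp add: indicator_def)
  qed
  have Vnn: "0 \<le> V n \<omega>" for n \<omega> unfolding V_def by (intro divide_nonneg_nonneg sum_nonneg) auto
  have Vdec: "V (Suc n) \<omega> \<le> V n \<omega>" for n \<omega>
  proof (cases "\<omega> \<in> B")
    case True
    have "\<omega> \<in> G (Suc n) (2 * k n \<omega>)" using kprop[OF True, of n] G2 by simp
    then have "k (Suc n) \<omega> \<le> 2 * k n \<omega>" using kprop[OF True, of "Suc n"] by blast
    then have "real (k (Suc n) \<omega>) / 2^Suc n \<le> real (2 * k n \<omega>) / 2^Suc n"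
      by (intro divide_right_mono) auto
    then show ?thesis using Vk[OF True] by simp
  next
    case False then show ?thesis using Vout[OF False, of "Suc n"] Vout[OF False, of n] by linarith
  qed
  have Winc: "V n \<omega> - 1 / 2^n \<le> V (Suc n) \<omega> - 1 / 2^Suc n" if \<omega>: "\<omega> \<in> B" for n \<omega>
  proof -
    have kp: "1 \<le> k n \<omega>" using kpos[OF \<omega>] .
    have "\<omega> \<notin> G n (k n \<omega> - 1)" using kprop[OF \<omega>, of n] kp by auto
    then have "\<omega> \<notin> G (Suc n) (2 * (k n \<omega> - 1))" using G2 by simp
    then have "\<not> k (Suc n) \<omega> \<le> 2 * (k n \<omega> - 1)" using kprop[OF \<omega>, of "Suc n"] by blast
    then have "2 * real (k n \<omega>) - 1 \<le> real (k (Suc n) \<omega>)" using kp by linarith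
    then have "(2 * real (k n \<omega>) - 2) / 2^Suc n \<le> (real (k (Suc n) \<omega>) - 1) / 2^Suc n"
      by (intro divide_right_mono) auto
    moreover have "real (k n \<omega>) / 2^n - 1 / 2^n = (2 * real (k n \<omega>) - 2) / 2^Suc n"
      by (simp add: field_simps)
    moreover have "real (k (Suc n) \<omega>) / 2^Suc n - 1 / 2^Suc n = (real (k (Suc n) \<omega>) - 1) / 2^Suc n"
      by (simp add: diff_divide_distrib)
    ultimately show ?thesis using Vk[OF \<omega>, of n] Vk[OF \<omega>, of "Suc n"] by simp
  qed
  define U where "U \<omega> = (INF n. V n \<omega>)" for \<omega>
  have bddV: "bdd_below (range (\<lambda>n. V n \<omega>))" for \<omega>
    by (rule bdd_belowI2[of _ 0]) (rule Vnn)
  have decV: "decseq (\<lambda>n. V n \<omega>)" for \<omega> using Vdec by (intro decseq_SucI) auto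
  have VU: "(\<lambda>n. V n \<omega>) \<longlonglongrightarrow> U \<omega>" for \<omega>
    unfolding U_def by (rule LIMSEQ_decseq_INF[OF bddV decV])
  have Umeas: "U \<in> borel_measurable M"
    by (rule borel_measurable_LIMSEQ_real[OF VU Vmeas])
  have Ule: "U \<omega> \<le> V n \<omega>" for n \<omega> unfolding U_def by (rule cINF_lower[OF bddV]) simp
  have Uge: "V n \<omega> - 1 / 2^n \<le> U \<omega>" if \<omega>: "\<omega> \<in> B" for n \<omega>
    unfolding U_def
  proof (rule cINF_greatest)
    fix m assume "m \<in> (UNIV :: nat set)"
    show "V n \<omega> - 1 / 2^n \<le> V m \<omega>"
    proof (cases "n \<le> m")
      case True
      have "incseq (\<lambda>n. V n \<omega> - 1 / 2^n)" using Winc[OF \<omega>] by (intro incseq_SucI) auto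
      then have "V n \<omega> - 1 / 2^n \<le> V m \<omega> - 1 / 2^m" using True by (simp add: incseq_def)
      moreover have "(0::real) \<le> 1 / 2^m" by simp
      ultimately show ?thesis by linarith
    next
      case False
      then have "V n \<omega> \<le> V m \<omega>" using decV[of \<omega>] by (simp add: decseq_def)
      moreover have "(0::real) \<le> 1 / 2^n" by simp
      ultimately show ?thesis by linarith
    qed
  qed simp
  have lev: "B \<inter> {\<omega>\<in>space M. V n \<omega> \<le> s} = G n (nat \<lfloor>s * 2^n\<rfloor>)" if s: "0 \<le> s" "s \<le> 1" for n s
  proof -
    have "\<omega> \<in> G n (nat \<lfloor>s * 2^n\<rfloor>) \<longleftrightarrow> V n \<omega> \<le> s" if \<omega>: "\<omega> \<in> B" for \<omega>
    proof -
      have "\<omega> \<in> G n (nat \<lfloor>s * 2^n\<rfloor>) \<longleftrightarrow> k n \<omega> \<le> nat \<lfloor>s * 2^n\<rfloor>" using kprop[OF \<omega>] by blast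
      also have "\<dots> \<longleftrightarrow> int (k n \<omega>) \<le> \<lfloor>s * 2^n\<rfloor>" using s by (auto simp: le_nat_iff)
      also have "\<dots> \<longleftrightarrow> real (k n \<omega>) \<le> s * 2^n" by (simp add: le_floor_iff)
      also have "\<dots> \<longleftrightarrow> real (k n \<omega>) / 2^n \<le> s" by (simp add: pos_divide_le_eq)
      also have "\<dots> \<longleftrightarrow> V n \<omega> \<le> s" using Vk[OF \<omega>, of n] by simp
      finally show ?thesis .
    qed
    then show ?thesis using Gsets[of n] B sets.sets_into_space by blast
  qed
  have levm: "measure M (B \<inter> {\<omega>\<in>space M. V n \<omega> \<le> s}) = real (nat \<lfloor>s * 2^n\<rfloor>) / 2^n * measure M B"
    and levb: "s - 1 / 2^n \<le> real (nat \<lfloor>s * 2^n\<rfloor>) / 2^n" "real (nat \<lfloor>s * 2^n\<rfloor>) / 2^n \<le> s"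
    if s: "0 \<le> s" "s \<le> 1" for n s
  proof -
    have fl: "real (nat \<lfloor>s * 2^n\<rfloor>) = of_int \<lfloor>s * 2^n\<rfloor>" using s by simp
    have f1: "of_int \<lfloor>s * 2^n\<rfloor> \<le> s * 2^n" by (rule of_int_floor_le)
    have f2: "s * 2^n - 1 < of_int \<lfloor>s * 2^n\<rfloor>" using floor_correct[of "s * 2^n"] by simp
    show "s - 1 / 2^n \<le> real (nat \<lfloor>s * 2^n\<rfloor>) / 2^n" unfolding fl by (rule aux_low[OF _ f2]) simp
    show "real (nat \<lfloor>s * 2^n\<rfloor>) / 2^n \<le> s" unfolding fl by (rule aux_up[OF _ f1]) simp
    have "real (nat \<lfloor>s * 2^n\<rfloor>) \<le> 2^n" using f1 fl s
      by (smt (verit) mult_left_le_one_le zero_le_power)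
    then have "nat \<lfloor>s * 2^n\<rfloor> \<le> 2^n" by (metis of_nat_le_iff of_nat_numeral of_nat_power)
    then show "measure M (B \<inter> {\<omega>\<in>space M. V n \<omega> \<le> s}) = real (nat \<lfloor>s * 2^n\<rfloor>) / 2^n * measure M B"
      using lev[OF s] Gmeas by simp
  qed
  have half0: "(\<lambda>n. 1 / (2::real)^n) \<longlonglongrightarrow> 0"
  proof -
    have "(\<lambda>n. (1 / (2::real))^n) \<longlonglongrightarrow> 0" by (rule LIMSEQ_realpow_zero) auto
    then show ?thesis by (simp add: power_one_over)
  qed
  have Psets: "B \<inter> {\<omega>\<in>space M. U \<omega> \<le> t} \<in> sets M" for t
    using B Umeas by measurable
  have Vsets: "B \<inter> {\<omega>\<in>space M. V n \<omega> \<le> t} \<in> sets M" for n t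
    using B Vmeas by measurable
  have cdf: "measure M (B \<inter> {\<omega>\<in>space M. U \<omega> \<le> t}) = t * measure M B" if t: "0 \<le> t" "t \<le> 1" for t
  proof (cases "t = 1")
    case True
    have "B \<inter> {\<omega>\<in>space M. U \<omega> \<le> t} = B"
    proof -
      have "U \<omega> \<le> 1" if "\<omega> \<in> B" for \<omega>
        using Ule[of \<omega> 0] Vk[OF that, of 0] kprop[OF that, of 0] by simp
      then show ?thesis using True B sets.sets_into_space by auto
    qed
    then show ?thesis using True by simp
  next
    case False
    then have t1: "t < 1" using t by simp
    have lo: "(t - 1 / 2^n) * measure M B \<le> measure M (B \<inter> {\<omega>\<in>space M. U \<omega> \<le> t})" for n
    proof -
      have "(t - 1 / 2^n) * measure M B \<le> real (nat \<lfloor>t * 2^n\<rfloor>) / 2^n * measure M B"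
        using levb(1)[OF t, of n] by (intro mult_right_mono) auto
      also have "\<dots> = measure M (B \<inter> {\<omega>\<in>space M. V n \<omega> \<le> t})" using levm[OF t] by simp
      also have "\<dots> \<le> measure M (B \<inter> {\<omega>\<in>space M. U \<omega> \<le> t})"
        using Ule[of _ n] Psets by (intro finite_measure_mono) (auto intro: order_trans)
      finally show ?thesis .
    qed
    have limlo: "(\<lambda>n. (t - 1 / 2^n) * measure M B) \<longlonglongrightarrow> (t - 0) * measure M B"
      by (intro tendsto_intros half0)
    have l1: "t * measure M B \<le> measure M (B \<inter> {\<omega>\<in>space M. U \<omega> \<le> t})"
      using LIMSEQ_le_const2[OF limlo] lo by auto
    have "eventually (\<lambda>n. 1 / (2::real)^n < 1 - t) sequentially"
      using half0 t1 by (intro order_tendstoD) auto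
    then obtain N where N: "\<And>n. n \<ge> N \<Longrightarrow> 1 / (2::real)^n < 1 - t"
      unfolding eventually_sequentially by blast
    have up: "measure M (B \<inter> {\<omega>\<in>space M. U \<omega> \<le> t}) \<le> (t + 1 / 2^n) * measure M B" if n: "n \<ge> N" for n
    proof -
      have s: "0 \<le> t + 1 / 2^n" "t + 1 / 2^n \<le> 1" using N[OF n] t by auto
      have "measure M (B \<inter> {\<omega>\<in>space M. U \<omega> \<le> t}) \<le> measure M (B \<inter> {\<omega>\<in>space M. V n \<omega> \<le> t + 1 / 2^n})"
        using Uge[of _ n] Vsets by (intro finite_measure_mono) (auto, smt (verit))
      also have "\<dots> = real (nat \<lfloor>(t + 1 / 2^n) * 2^n\<rfloor>) / 2^n * measure M B" using levm[OF s] by simp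
      also have "\<dots> \<le> (t + 1 / 2^n) * measure M B"
        using levb(2)[OF s, of n] by (intro mult_right_mono) auto
      finally show ?thesis .
    qed
    have limup: "(\<lambda>n. (t + 1 / 2^n) * measure M B) \<longlonglongrightarrow> (t + 0) * measure M B"
      by (intro tendsto_intros half0)
    have l2: "measure M (B \<inter> {\<omega>\<in>space M. U \<omega> \<le> t}) \<le> t * measure M B"
      using LIMSEQ_le_const[OF limup] up by auto
    show ?thesis using l1 l2 by simp
  qed
  have N1: "measure M (B \<inter> {\<omega>\<in>space M. 1 \<le> U \<omega>}) = 0"
  proof -
    have N1s: "B \<inter> {\<omega>\<in>space M. 1 \<le> U \<omega>} \<in> sets M" using B Umeas by measurable
    have bnd: "measure M (B \<inter> {\<omega>\<in>space M. 1 \<le> U \<omega>}) \<le> 1 / 2^n * measure M B" for n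
    proof -
      have sub: "B \<inter> {\<omega>\<in>space M. 1 \<le> U \<omega>} \<subseteq> B - G n (2^n - 1)"
      proof
        fix \<omega> assume \<omega>: "\<omega> \<in> B \<inter> {\<omega>\<in>space M. 1 \<le> U \<omega>}"
        then have wB: "\<omega> \<in> B" by blast
        have "1 \<le> U \<omega>" using \<omega> by blast
        then have "1 \<le> real (k n \<omega>) / 2^n" using Ule[of \<omega> n] Vk[OF wB, of n] by linarith
        then have "2^n \<le> real (k n \<omega>)" by (simp add: le_divide_eq)
        then have "2^n \<le> k n \<omega>" by (metis of_nat_le_iff of_nat_numeral of_nat_power)
        then have "\<not> k n \<omega> \<le> 2^n - 1" by (metis One_nat_def diff_less le_trans not_less pos2 zero_less_power zero_less_one)
        then show "\<omega> \<in> B - G n (2^n - 1)" using kprop[OF wB, of n] wB by blast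
      qed
      have "measure M (B - G n (2^n - 1)) = measure M B - measure M (G n (2^n - 1))"
        using B Gsets by (intro finite_measure_Diff) auto
      also have "\<dots> = measure M B - real (2^n - 1) / 2^n * measure M B" using Gmeas[of "2^n - 1" n] by simp
      also have "\<dots> = 1 / 2^n * measure M B"
      proof -
        have "real (2^n - 1 :: nat) = 2^n - 1" by (simp add: of_nat_diff)
        then show ?thesis by (simp add: field_simps)
      qed
      finally show ?thesis using sub B Gsets[of n] finite_measure_mono[OF sub] by auto
    qed
    have lim0: "(\<lambda>n. 1 / 2^n * measure M B) \<longlonglongrightarrow> 0 * measure M B"
      by (intro tendsto_intros half0)
    have "measure M (B \<inter> {\<omega>\<in>space M. 1 \<le> U \<omega>}) \<le> 0"
      using LIMSEQ_le_const[OF lim0] bnd by auto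
    then show ?thesis by (simp add: measure_nonneg antisym)
  qed
  have N0: "measure M (B \<inter> {\<omega>\<in>space M. U \<omega> \<le> 0}) = 0" using cdf[of 0] by simp
  have Nnull: "(B \<inter> {\<omega>\<in>space M. U \<omega> \<le> 0 \<or> 1 \<le> U \<omega>}) \<in> null_sets M"
  proof -
    have eq: "B \<inter> {\<omega>\<in>space M. U \<omega> \<le> 0 \<or> 1 \<le> U \<omega>} = (B \<inter> {\<omega>\<in>space M. U \<omega> \<le> 0}) \<union> (B \<inter> {\<omega>\<in>space M. 1 \<le> U \<omega>})"
      by auto
    have s1: "B \<inter> {\<omega>\<in>space M. 1 \<le> U \<omega>} \<in> sets M" using B Umeas by measurable
    have "measure M (B \<inter> {\<omega>\<in>space M. U \<omega> \<le> 0 \<or> 1 \<le> U \<omega>}) \<le> 0 + 0"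
      unfolding eq using N0 N1 Psets[of 0] s1 measure_Un_le[OF Psets[of 0] s1]
      by simp
    then have m0: "measure M (B \<inter> {\<omega>\<in>space M. U \<omega> \<le> 0 \<or> 1 \<le> U \<omega>}) = 0" by (simp add: measure_nonneg antisym)
    have "B \<inter> {\<omega>\<in>space M. U \<omega> \<le> 0 \<or> 1 \<le> U \<omega>} \<in> sets M" using B Umeas by measurable
    then show ?thesis using m0 by (simp add: null_setsI emeasure_eq_measure)
  qed
  show ?thesis using Umeas cdf Nnull by blast
qed

end

definition clamp :: "real \<Rightarrow> real" where "clamp t = min 1 (max 0 t)"

lemma inv_lt_aux: assumes x: "0 < (x::real)" and n: "1 / x < real n" shows "1 / (real n + 1) < x"
proof -
  have "1 < real n * x" using n x by (simp add: divide_less_eq)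
  then have "1 < (real n + 1) * x" using x by (simp add: distrib_right)
  then show ?thesis by (simp add: divide_less_eq mult.commute)
qed

context prob_space
begin

lemma sub_uniform:
  assumes na: "nonatomic M" and B: "B \<in> sets M" "measure M B > 0"
  shows "\<exists>V\<in>borel_measurable M. (\<forall>\<omega>. 0 < V \<omega> \<and> V \<omega> < 1) \<and>
    (\<forall>t. measure M (B \<inter> {\<omega>\<in>space M. V \<omega> \<le> t}) = clamp t * measure M B)"
proof -
  obtain U where Um: "U \<in> borel_measurable M"
    and cdf: "\<And>t. 0 \<le> t \<Longrightarrow> t \<le> 1 \<Longrightarrow> measure M (B \<inter> {\<omega>\<in>space M. U \<omega> \<le> t}) = t * measure M B"
    and N: "(B \<inter> {\<omega>\<in>space M. U \<omega> \<le> 0 \<or> 1 \<le> U \<omega>}) \<in> null_sets M"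
    using sub_uniform_raw[OF na B] by blast
  define N where "N = B \<inter> {\<omega>\<in>space M. U \<omega> \<le> 0 \<or> 1 \<le> U \<omega>}"
  define V where "V \<omega> = (if 0 < U \<omega> \<and> U \<omega> < 1 then U \<omega> else 1/2)" for \<omega>
  have Vm: "V \<in> borel_measurable M" unfolding V_def using Um by measurable
  have V01: "0 < V \<omega> \<and> V \<omega> < 1" for \<omega> by (simp add: V_def)
  have Vs: "B \<inter> {\<omega>\<in>space M. V \<omega> \<le> t} \<in> sets M" for t using B Vm by measurable
  have Us: "B \<inter> {\<omega>\<in>space M. U \<omega> \<le> t} \<in> sets M" for t using B Um by measurable
  have eqN: "B \<inter> {\<omega>\<in>space M. V \<omega> \<le> t} - N = B \<inter> {\<omega>\<in>space M. U \<omega> \<le> t} - N" for t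
    unfolding N_def V_def by auto
  have cdfV: "measure M (B \<inter> {\<omega>\<in>space M. V \<omega> \<le> t}) = clamp t * measure M B" for t
  proof (cases "t < 0")
    case True
    then have "B \<inter> {\<omega>\<in>space M. V \<omega> \<le> t} = {}" using V01 by (auto simp: not_le intro: le_less_trans) (smt (verit) V01)
    then show ?thesis using True by (simp add: clamp_def)
  next
    case False
    show ?thesis
    proof (cases "t > 1")
      case True
      then have "B \<inter> {\<omega>\<in>space M. V \<omega> \<le> t} = B" using V01 B sets.sets_into_space
        by auto (smt (verit) V01)
      then show ?thesis using True by (simp add: clamp_def)
    next
      case False2: False
      have "measure M (B \<inter> {\<omega>\<in>space M. V \<omega> \<le> t}) = measure M (B \<inter> {\<omega>\<in>space M. V \<omega> \<le> t} - N)"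
        using measure_Diff_null_set[OF Vs N[folded N_def]] by simp
      also have "\<dots> = measure M (B \<inter> {\<omega>\<in>space M. U \<omega> \<le> t} - N)" by (simp only: eqN)
      also have "\<dots> = measure M (B \<inter> {\<omega>\<in>space M. U \<omega> \<le> t})"
        using measure_Diff_null_set[OF Us N[folded N_def]] by simp
      also have "\<dots> = t * measure M B" using cdf False False2 by simp
      finally show ?thesis using False False2 by (simp add: clamp_def)
    qed
  qed
  show ?thesis using Vm V01 cdfV by blast
qed

lemma glue:
  assumes C: "C \<in> sets M" and a: "a = measure M C" "0 < a" "a < 1"
    and VCm: "VC \<in> borel_measurable M" and VDm: "VD \<in> borel_measurable M"
    and VC01: "\<And>\<omega>. 0 < VC \<omega> \<and> VC \<omega> < 1" and VD01: "\<And>\<omega>. 0 < VD \<omega> \<and> VD \<omega> < 1"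
    and cC: "\<And>t. measure M (C \<inter> {\<omega>\<in>space M. VC \<omega> \<le> t}) = clamp t * measure M C"
    and cD: "\<And>t. measure M ((space M - C) \<inter> {\<omega>\<in>space M. VD \<omega> \<le> t}) = clamp t * measure M (space M - C)"
  defines "U \<equiv> (\<lambda>\<omega>. if \<omega> \<in> C then a * VC \<omega> else a + (1 - a) * VD \<omega>)"
  shows "U \<in> borel_measurable M" "\<And>\<omega>. 0 < U \<omega> \<and> U \<omega> < 1"
    "\<And>x. 0 \<le> x \<Longrightarrow> x \<le> 1 \<Longrightarrow> measure M {\<omega>\<in>space M. U \<omega> \<le> x} = x"
proof -
  show "U \<in> borel_measurable M" unfolding U_def using C VCm VDm by measurable
  show "0 < U \<omega> \<and> U \<omega> < 1" for \<omega>
  proof (cases "\<omega> \<in> C")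
    case True
    have "a * VC \<omega> < a * 1" using VC01[of \<omega>] a by (intro mult_strict_left_mono) auto
    then have "a * VC \<omega> < 1" using a(3) by linarith
    moreover have "0 < a * VC \<omega>" using VC01[of \<omega>] a(2) by simp
    ultimately show ?thesis using True by (simp add: U_def)
  next
    case False
    have "(1 - a) * VD \<omega> < (1 - a) * 1" using VD01[of \<omega>] a by (intro mult_strict_left_mono) auto
    then have "(1 - a) * VD \<omega> < 1 - a" by simp
    then have "a + (1 - a) * VD \<omega> < 1" by linarith
    moreover have "0 < a + (1 - a) * VD \<omega>" using VD01[of \<omega>] a(2,3) by (smt (verit) mult_pos_pos)
    ultimately show ?thesis using False by (simp add: U_def)
  qed
  fix x :: real assume x: "0 \<le> x" "x \<le> 1"
  define D where "D = space M - C"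
  have Ds: "D \<in> sets M" using C by (simp add: D_def)
  have mD: "measure M D = 1 - a" using a prob_compl[OF C] by (simp add: D_def)
  have split: "{\<omega>\<in>space M. U \<omega> \<le> x} = (C \<inter> {\<omega>\<in>space M. VC \<omega> \<le> x / a}) \<union> (D \<inter> {\<omega>\<in>space M. VD \<omega> \<le> (x - a) / (1 - a)})"
  proof -
    have "a * VC \<omega> \<le> x \<longleftrightarrow> VC \<omega> \<le> x / a" for \<omega> using a by (simp add: le_divide_eq mult.commute)
    moreover have "a + (1 - a) * VD \<omega> \<le> x \<longleftrightarrow> VD \<omega> \<le> (x - a) / (1 - a)" for \<omega>
      using a by (simp add: le_divide_eq mult.commute) linarith
    ultimately show ?thesis using C sets.sets_into_space unfolding U_def D_def by auto
  qed
  have s1: "C \<inter> {\<omega>\<in>space M. VC \<omega> \<le> x / a} \<in> sets M" using C VCm by measurable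
  have s2: "D \<inter> {\<omega>\<in>space M. VD \<omega> \<le> (x - a) / (1 - a)} \<in> sets M" using Ds VDm by measurable
  have "measure M {\<omega>\<in>space M. U \<omega> \<le> x} = clamp (x / a) * a + clamp ((x - a) / (1 - a)) * (1 - a)"
    unfolding split using cC[of "x / a"] cD[of "(x - a) / (1 - a)"] a mD
    by (subst finite_measure_Union[OF s1 s2]) (auto simp: D_def)
  also have "\<dots> = x"
  proof (cases "x \<le> a")
    case True
    then have "clamp (x / a) = x / a" "clamp ((x - a) / (1 - a)) = 0"
      using x a by (auto simp: clamp_def divide_le_eq_1 divide_nonpos_pos)
    then show ?thesis using a by simp
  next
    case False
    then have "clamp (x / a) = 1" "clamp ((x - a) / (1 - a)) = (x - a) / (1 - a)"
      using x a by (auto simp: clamp_def le_divide_eq_1 divide_le_eq_1)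
    then show ?thesis using a by simp
  qed
  finally show "measure M {\<omega>\<in>space M. U \<omega> \<le> x} = x" .
qed

lemma nonconst_threshold:
  fixes Q :: "'a \<Rightarrow> real"
  assumes Qm[measurable]: "Q \<in> borel_measurable M" and nc: "\<not> (\<exists>c. AE \<omega> in M. Q \<omega> = c)"
  shows "\<exists>u. 0 < measure M {\<omega>\<in>space M. u < Q \<omega>} \<and> 0 < measure M {\<omega>\<in>space M. Q \<omega> \<le> u}"
proof (rule ccontr)
  assume "\<not> ?thesis"
  then have dich: "(AE \<omega> in M. Q \<omega> \<le> u) \<or> (AE \<omega> in M. u < Q \<omega>)" for u
  proof -
    assume h: "\<not> (\<exists>u. 0 < measure M {\<omega>\<in>space M. u < Q \<omega>} \<and> 0 < measure M {\<omega>\<in>space M. Q \<omega> \<le> u})"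
    have "Q -` {..u} \<inter> space M \<in> sets M" by (rule measurable_sets[OF Qm]) simp
    moreover have "{\<omega>\<in>space M. Q \<omega> \<le> u} = Q -` {..u} \<inter> space M" by auto
    ultimately have s2: "{\<omega>\<in>space M. Q \<omega> \<le> u} \<in> sets M" by simp
    have "{\<omega>\<in>space M. u < Q \<omega>} = space M - {\<omega>\<in>space M. Q \<omega> \<le> u}" by auto
    then have s1: "{\<omega>\<in>space M. u < Q \<omega>} \<in> sets M" using s2 by auto
    have "measure M {\<omega>\<in>space M. u < Q \<omega>} = 0 \<or> measure M {\<omega>\<in>space M. Q \<omega> \<le> u} = 0"
    proof -
      have "\<not> (0 < measure M {\<omega>\<in>space M. u < Q \<omega>} \<and> 0 < measure M {\<omega>\<in>space M. Q \<omega> \<le> u})"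
        using h by blast
      then show ?thesis using measure_nonneg[of M "{\<omega>\<in>space M. u < Q \<omega>}"] measure_nonneg[of M "{\<omega>\<in>space M. Q \<omega> \<le> u}"]
        by linarith
    qed
    then show ?thesis
    proof
      assume "measure M {\<omega>\<in>space M. u < Q \<omega>} = 0"
      then have "AE \<omega> in M. Q \<omega> \<le> u"
        using s1 by (subst AE_iff_measurable[OF s1]) (auto simp: emeasure_eq_measure not_le)
      then show ?thesis by blast
    next
      assume "measure M {\<omega>\<in>space M. Q \<omega> \<le> u} = 0"
      then have "AE \<omega> in M. u < Q \<omega>"
        using s2 by (subst AE_iff_measurable[OF s2]) (auto simp: emeasure_eq_measure not_le)
      then show ?thesis by blast
    qed
  qed
  define S where "S = {u. AE \<omega> in M. Q \<omega> \<le> u}"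
  have notF: "\<not> (AE \<omega> in M. False)" by simp
  have Sne: "S \<noteq> {}"
  proof
    assume "S = {}"
    then have "\<forall>n::nat. AE \<omega> in M. real n < Q \<omega>" using dich unfolding S_def by blast
    then have "AE \<omega> in M. \<forall>n::nat. real n < Q \<omega>" by (simp add: AE_all_countable)
    then have "AE \<omega> in M. False"
      by (rule eventually_mono) (meson reals_Archimedean2 order.asym)
    then show False using notF by blast
  qed
  have Sbdd: "bdd_below S"
  proof (rule ccontr)
    assume "\<not> bdd_below S"
    then have "\<forall>n::nat. \<exists>u\<in>S. u < - real n" unfolding bdd_below_def by (meson not_le)
    have "\<forall>n::nat. AE \<omega> in M. Q \<omega> \<le> - real n"
    proof
      fix n :: nat
      obtain u where u: "u \<in> S" "u < - real n" using \<open>\<forall>n::nat. \<exists>u\<in>S. u < - real n\<close> by blast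
      from u(1) have "AE \<omega> in M. Q \<omega> \<le> u" by (simp add: S_def)
      then show "AE \<omega> in M. Q \<omega> \<le> - real n" by (rule eventually_mono) (use u(2) in linarith)
    qed
    then have "AE \<omega> in M. \<forall>n::nat. Q \<omega> \<le> - real n" by (simp add: AE_all_countable)
    then have "AE \<omega> in M. False"
    proof (rule eventually_mono)
      fix \<omega> assume h: "\<forall>n::nat. Q \<omega> \<le> - real n"
      obtain n :: nat where "- Q \<omega> < real n" using reals_Archimedean2 by blast
      then show False using h[rule_format, of n] by simp
    qed
    then show False using notF by blast
  qed
  define c where "c = Inf S"
  have up: "AE \<omega> in M. Q \<omega> \<le> c"
  proof -
    have "\<forall>n::nat. AE \<omega> in M. Q \<omega> \<le> c + 1 / (real n + 1)"
    proof
      fix n :: nat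
      have "Inf S < c + 1 / (real n + 1)" unfolding c_def by simp
      then obtain u where "u \<in> S" "u < c + 1 / (real n + 1)" using cInf_less_iff[OF Sne Sbdd] by blast
      then show "AE \<omega> in M. Q \<omega> \<le> c + 1 / (real n + 1)"
        unfolding S_def by (auto elim: eventually_mono)
    qed
    then have "AE \<omega> in M. \<forall>n::nat. Q \<omega> \<le> c + 1 / (real n + 1)" by (simp add: AE_all_countable)
    then show ?thesis
    proof (rule eventually_mono)
      fix \<omega> assume h: "\<forall>n::nat. Q \<omega> \<le> c + 1 / (real n + 1)"
      show "Q \<omega> \<le> c"
      proof (rule ccontr)
        assume "\<not> Q \<omega> \<le> c"
        then have pos: "Q \<omega> - c > 0" by simp
        obtain n :: nat where "1 / (Q \<omega> - c) < real n" using reals_Archimedean2 by blast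
        then have "1 / (real n + 1) < Q \<omega> - c" using pos by (intro inv_lt_aux)
        then show False using h[rule_format, of n] by simp
      qed
    qed
  qed
  have lo: "AE \<omega> in M. c \<le> Q \<omega>"
  proof -
    have "\<forall>n::nat. AE \<omega> in M. c - 1 / (real n + 1) < Q \<omega>"
    proof
      fix n :: nat
      have "c - 1 / (real n + 1) \<notin> S"
      proof
        assume "c - 1 / (real n + 1) \<in> S"
        then have "c \<le> c - 1 / (real n + 1)" unfolding c_def by (rule cInf_lower[OF _ Sbdd])
        moreover have "0 < 1 / (real n + 1)" by simp
        ultimately show False by linarith
      qed
      then show "AE \<omega> in M. c - 1 / (real n + 1) < Q \<omega>" using dich unfolding S_def by blast
    qed
    then have "AE \<omega> in M. \<forall>n::nat. c - 1 / (real n + 1) < Q \<omega>" by (simp add: AE_all_countable)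
    then show ?thesis
    proof (rule eventually_mono)
      fix \<omega> assume h: "\<forall>n::nat. c - 1 / (real n + 1) < Q \<omega>"
      show "c \<le> Q \<omega>"
      proof (rule ccontr)
        assume "\<not> c \<le> Q \<omega>"
        then have pos: "c - Q \<omega> > 0" by simp
        obtain n :: nat where "1 / (c - Q \<omega>) < real n" using reals_Archimedean2 by blast
        then have "1 / (real n + 1) < c - Q \<omega>" using pos by (intro inv_lt_aux)
        then show False using h[rule_format, of n] by simp
      qed
    qed
  qed
  have "AE \<omega> in M. Q \<omega> = c" using up lo by eventually_elim simp
  then show False using nc by blast
qed

end

lemma quantile_law:
  fixes S1 U :: "'a \<Rightarrow> real"
  assumes ps: "prob_space M" and S1m: "S1 \<in> borel_measurable M" and Um: "U \<in> borel_measurable M"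
    and U01: "\<And>\<omega>. 0 < U \<omega> \<and> U \<omega> < 1"
    and Ucdf: "\<And>x. 0 \<le> x \<Longrightarrow> x \<le> 1 \<Longrightarrow> measure M {\<omega>\<in>space M. U \<omega> \<le> x} = x"
  shows "same_law M S1 (\<lambda>\<omega>. Inf {x. U \<omega> \<le> cdf (distr M borel S1) x})"
proof -
  interpret prob_space M by fact
  define \<mu> where "\<mu> = distr M borel S1"
  have rd: "real_distribution \<mu>" unfolding \<mu>_def using S1m by simp
  interpret C: cdf_distribution \<mu> using rd by (simp add: cdf_distribution_def)
  define I where "I = (\<lambda>w. Inf {x. w \<le> cdf \<mu> x})"
  have pinv: "0 < w \<Longrightarrow> w < 1 \<Longrightarrow> w \<le> cdf \<mu> x \<longleftrightarrow> I w \<le> x" for w x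
    unfolding I_def by (rule C.pseudoinverse)
  have Ur: "U \<in> measurable M (restrict_space borel {0<..<1})"
    using Um U01 by (intro measurable_restrict_space2) auto
  have Sm: "(\<lambda>\<omega>. I (U \<omega>)) \<in> borel_measurable M"
    using measurable_compose[OF Ur C.measurable_CI] unfolding I_def by simp
  have "distr M borel (\<lambda>\<omega>. I (U \<omega>)) = \<mu>"
  proof (rule cdf_unique)
    show "real_distribution (distr M borel (\<lambda>\<omega>. I (U \<omega>)))" using Sm by simp
    show "real_distribution \<mu>" by fact
    show "cdf (distr M borel (\<lambda>\<omega>. I (U \<omega>))) = cdf \<mu>"
    proof
      fix x
      have "cdf (distr M borel (\<lambda>\<omega>. I (U \<omega>))) x = measure M ((\<lambda>\<omega>. I (U \<omega>)) -` {..x} \<inter> space M)"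
        unfolding cdf_def using Sm by (simp add: measure_distr)
      also have "(\<lambda>\<omega>. I (U \<omega>)) -` {..x} \<inter> space M = {\<omega>\<in>space M. U \<omega> \<le> cdf \<mu> x}"
        using pinv U01 by auto
      also have "measure M {\<omega>\<in>space M. U \<omega> \<le> cdf \<mu> x} = cdf \<mu> x"
        using Ucdf C.cdf_nonneg C.cdf_bounded_prob by blast
      finally show "cdf (distr M borel (\<lambda>\<omega>. I (U \<omega>))) x = cdf \<mu> x" .
    qed
  qed
  then show ?thesis using S1m Sm unfolding same_law_def \<mu>_def I_def by simp
qed


lemma same_law_integral:
  assumes "same_law M X Y"
  shows "integral\<^sup>L M X = integral\<^sup>L M Y"
proof -
  have mX: "X \<in> borel_measurable M" and mY: "Y \<in> borel_measurable M"
    and d: "distr M borel X = distr M borel Y" using assms by (auto simp: same_law_def)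
  have "integral\<^sup>L M X = integral\<^sup>L (distr M borel X) (\<lambda>x. x)" using mX by (simp add: integral_distr)
  also have "\<dots> = integral\<^sup>L (distr M borel Y) (\<lambda>x. x)" using d by simp
  also have "\<dots> = integral\<^sup>L M Y" using mY by (simp add: integral_distr)
  finally show ?thesis .
qed

lemma clamp_strict:
  assumes "s1 < s2" "s1 < 1" "0 < s2"
  shows "clamp s1 < clamp s2"
  using assms unfolding clamp_def by (auto simp: min_def max_def)

lemma clamp_mono: "s1 \<le> s2 \<Longrightarrow> clamp s1 \<le> clamp s2"
  unfolding clamp_def by (auto simp: min_def max_def)

lemma rearr:
  fixes S1 Q :: "'a \<Rightarrow> real"
  assumes ps: "prob_space M" and na: "nonatomic M" and S1m: "S1 \<in> borel_measurable M"
   and S1nc: "\<not>(\<exists>c. AE \<omega> in M. S1 \<omega> = c)"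
   and Qm: "Q \<in> borel_measurable M" and Qnc: "\<not>(\<exists>c. AE \<omega> in M. Q \<omega> = c)"
   and hint: "\<forall>S'. same_law M S1 S' \<longrightarrow> integrable M S' \<and> integrable M (\<lambda>\<omega>. S' \<omega> * Q \<omega>)"
  shows "\<exists>S' S''. same_law M S1 S' \<and> same_law M S1 S'' \<and>
     integral\<^sup>L M (\<lambda>\<omega>. S' \<omega> * Q \<omega>) \<noteq> integral\<^sup>L M (\<lambda>\<omega>. S'' \<omega> * Q \<omega>)"
proof -
  interpret prob_space M by fact
  obtain u where u1: "0 < measure M {\<omega>\<in>space M. u < Q \<omega>}" and u2: "0 < measure M {\<omega>\<in>space M. Q \<omega> \<le> u}"
    using nonconst_threshold[OF Qm Qnc] by blast
  obtain t where t1: "0 < measure M {\<omega>\<in>space M. t < S1 \<omega>}" and t2: "0 < measure M {\<omega>\<in>space M. S1 \<omega> \<le> t}"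
    using nonconst_threshold[OF S1m S1nc] by blast
  define C where "C = {\<omega>\<in>space M. Q \<omega> \<le> u}"
  define D where "D = {\<omega>\<in>space M. u < Q \<omega>}"
  have Cs: "C \<in> sets M"
  proof -
    have "Q -` {..u} \<inter> space M \<in> sets M" by (rule measurable_sets[OF Qm]) simp
    moreover have "C = Q -` {..u} \<inter> space M" by (auto simp: C_def)
    ultimately show ?thesis by simp
  qed
  have DC: "D = space M - C" by (auto simp: C_def D_def)
  have CD: "space M - D = C" using sets.sets_into_space[OF Cs] by (auto simp: DC)
  have Ds: "D \<in> sets M" using Cs by (simp add: DC)
  define a where "a = measure M C"
  have mD: "measure M D = 1 - a" unfolding a_def DC using prob_compl[OF Cs] .
  have a0: "0 < a" using u2 by (simp add: a_def C_def)
  have a1: "a < 1" using u1 mD by (simp add: D_def)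
  define \<mu> where "\<mu> = distr M borel S1"
  have rd: "real_distribution \<mu>" unfolding \<mu>_def using S1m by simp
  interpret Cd: cdf_distribution \<mu> using rd by (simp add: cdf_distribution_def)
  define I where "I = (\<lambda>w. Inf {x. w \<le> cdf \<mu> x})"
  have pinv: "0 < w \<Longrightarrow> w < 1 \<Longrightarrow> w \<le> cdf \<mu> x \<longleftrightarrow> I w \<le> x" for w x
    unfolding I_def by (rule Cd.pseudoinverse)
  have Imono: "0 < w1 \<Longrightarrow> w1 < 1 \<Longrightarrow> 0 < w2 \<Longrightarrow> w2 < 1 \<Longrightarrow> w1 \<le> w2 \<Longrightarrow> I w1 \<le> I w2" for w1 w2
    using Cd.mono_I unfolding I_def mono_on_def by auto
  define b where "b = cdf \<mu> t"
  have S1t: "{\<omega>\<in>space M. S1 \<omega> \<le> t} = S1 -` {..t} \<inter> space M" by auto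
  have S1ts: "S1 -` {..t} \<inter> space M \<in> sets M" by (rule measurable_sets[OF S1m]) simp
  have bdef: "b = measure M {\<omega>\<in>space M. S1 \<omega> \<le> t}"
    unfolding b_def cdf_def \<mu>_def S1t using S1m by (simp add: measure_distr)
  have b0: "0 < b" using t2 bdef by simp
  have b1: "b < 1"
  proof -
    have "{\<omega>\<in>space M. t < S1 \<omega>} = space M - {\<omega>\<in>space M. S1 \<omega> \<le> t}" by auto
    then have "measure M {\<omega>\<in>space M. t < S1 \<omega>} = 1 - b"
      using prob_compl[of "{\<omega>\<in>space M. S1 \<omega> \<le> t}"] S1ts S1t bdef by simp
    then show ?thesis using t1 by simp
  qed
  have mC: "measure M C > 0" using a0 a_def by simp
  have mD0: "measure M D > 0" using a1 mD by simp
  obtain VC where VCm: "VC \<in> borel_measurable M" and VC01: "\<And>\<omega>. 0 < VC \<omega> \<and> VC \<omega> < 1"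
    and cC: "\<And>s. measure M (C \<inter> {\<omega>\<in>space M. VC \<omega> \<le> s}) = clamp s * measure M C"
    using sub_uniform[OF na Cs mC] by blast
  obtain VD where VDm: "VD \<in> borel_measurable M" and VD01: "\<And>\<omega>. 0 < VD \<omega> \<and> VD \<omega> < 1"
    and cD: "\<And>s. measure M (D \<inter> {\<omega>\<in>space M. VD \<omega> \<le> s}) = clamp s * measure M D"
    using sub_uniform[OF na Ds mD0] by blast
  define U1 where "U1 = (\<lambda>\<omega>. if \<omega> \<in> C then a * VC \<omega> else a + (1 - a) * VD \<omega>)"
  define U2 where "U2 = (\<lambda>\<omega>. if \<omega> \<in> D then (1 - a) * VD \<omega> else (1 - a) + (1 - (1 - a)) * VC \<omega>)"
  have cD': "measure M ((space M - C) \<inter> {\<omega>\<in>space M. VD \<omega> \<le> s}) = clamp s * measure M (space M - C)" for s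
    using cD DC by simp
  have cC': "measure M ((space M - D) \<inter> {\<omega>\<in>space M. VC \<omega> \<le> s}) = clamp s * measure M (space M - D)" for s
    using cC CD by simp
  note g1 = glue[OF Cs a_def a0 a1 VCm VDm VC01 VD01 cC cD']
  have a'def: "1 - a = measure M D" using mD by simp
  note g2 = glue[OF Ds a'def _ _ VDm VCm VD01 VC01 cD cC']
  have U2m: "U2 \<in> borel_measurable M" and U201: "\<And>\<omega>. 0 < U2 \<omega> \<and> U2 \<omega> < 1"
    and U2cdf: "\<And>x. 0 \<le> x \<Longrightarrow> x \<le> 1 \<Longrightarrow> measure M {\<omega>\<in>space M. U2 \<omega> \<le> x} = x"
    using g2 a0 a1 unfolding U2_def by auto
  have U1m: "U1 \<in> borel_measurable M" and U101: "\<And>\<omega>. 0 < U1 \<omega> \<and> U1 \<omega> < 1"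
    and U1cdf: "\<And>x. 0 \<le> x \<Longrightarrow> x \<le> 1 \<Longrightarrow> measure M {\<omega>\<in>space M. U1 \<omega> \<le> x} = x"
    using g1 unfolding U1_def by auto
  define S' where "S' = (\<lambda>\<omega>. I (U1 \<omega>))"
  define S'' where "S'' = (\<lambda>\<omega>. I (U2 \<omega>))"
  have L1: "same_law M S1 S'"
    using quantile_law[OF ps S1m U1m U101 U1cdf] unfolding S'_def I_def \<mu>_def .
  have L2: "same_law M S1 S''"
    using quantile_law[OF ps S1m U2m U201 U2cdf] unfolding S''_def I_def \<mu>_def .
  have S'm: "S' \<in> borel_measurable M" and S''m: "S'' \<in> borel_measurable M"
    using L1 L2 by (auto simp: same_law_def)
  have i1: "integrable M S'" "integrable M (\<lambda>\<omega>. S' \<omega> * Q \<omega>)" using hint L1 by auto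
  have i2: "integrable M S''" "integrable M (\<lambda>\<omega>. S'' \<omega> * Q \<omega>)" using hint L2 by auto
  define f where "f = (\<lambda>\<omega>. (S' \<omega> - S'' \<omega>) * (Q \<omega> - u))"
  have fint: "integrable M f"
  proof -
    have "f = (\<lambda>\<omega>. (S' \<omega> * Q \<omega> - S'' \<omega> * Q \<omega>) - (u * S' \<omega> - u * S'' \<omega>))"
      unfolding f_def by (auto simp: algebra_simps)
    then show ?thesis using i1 i2 by simp
  qed
  have fval: "integral\<^sup>L M f = integral\<^sup>L M (\<lambda>\<omega>. S' \<omega> * Q \<omega>) - integral\<^sup>L M (\<lambda>\<omega>. S'' \<omega> * Q \<omega>)"
  proof -
    have "f = (\<lambda>\<omega>. (S' \<omega> * Q \<omega> - S'' \<omega> * Q \<omega>) - (u * S' \<omega> - u * S'' \<omega>))"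
      unfolding f_def by (auto simp: algebra_simps)
    then have "integral\<^sup>L M f = (integral\<^sup>L M (\<lambda>\<omega>. S' \<omega> * Q \<omega>) - integral\<^sup>L M (\<lambda>\<omega>. S'' \<omega> * Q \<omega>))
        - (u * integral\<^sup>L M S' - u * integral\<^sup>L M S'')"
      using i1 i2 by simp
    moreover have "integral\<^sup>L M S' = integral\<^sup>L M S''"
      using same_law_integral[OF L1] same_law_integral[OF L2] by simp
    ultimately show ?thesis by simp
  qed
  have fnn: "0 \<le> f \<omega>" if \<omega>: "\<omega> \<in> space M" for \<omega>
  proof (cases "\<omega> \<in> C")
    case True
    then have "Q \<omega> \<le> u" by (simp add: C_def)
    moreover have "\<omega> \<notin> D" using True by (simp add: DC)
    moreover have "U1 \<omega> \<le> U2 \<omega>" using True \<open>\<omega> \<notin> D\<close> a1 by (simp add: U1_def U2_def)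
    then have "S' \<omega> \<le> S'' \<omega>" unfolding S'_def S''_def using U101 U201 by (intro Imono) auto
    ultimately show ?thesis unfolding f_def by (intro mult_nonpos_nonpos) auto
  next
    case False
    then have D: "\<omega> \<in> D" using \<omega> by (simp add: DC)
    then have "u < Q \<omega>" by (simp add: D_def)
    moreover have "U2 \<omega> \<le> U1 \<omega>" using False D a0 by (simp add: U1_def U2_def)
    then have "S'' \<omega> \<le> S' \<omega>" unfolding S'_def S''_def using U101 U201 by (intro Imono) auto
    ultimately show ?thesis unfolding f_def by (intro mult_nonneg_nonneg) auto
  qed
  define s1 where "s1 = (b - a) / (1 - a)"
  define s2 where "s2 = b / (1 - a)"
  define P where "P = (D \<inter> {\<omega>\<in>space M. VD \<omega> \<le> s2}) - (D \<inter> {\<omega>\<in>space M. VD \<omega> \<le> s1})"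
  have s12: "s1 \<le> s2" using a0 a1 by (simp add: s1_def s2_def divide_right_mono)
  have Ps1: "D \<inter> {\<omega>\<in>space M. VD \<omega> \<le> s1} \<in> sets M" using Ds VDm by measurable
  have Ps2: "D \<inter> {\<omega>\<in>space M. VD \<omega> \<le> s2} \<in> sets M" using Ds VDm by measurable
  have mP: "measure M P = (clamp s2 - clamp s1) * measure M D"
    unfolding P_def using s12 cD[of s1] cD[of s2]
    by (subst finite_measure_Diff[OF Ps2 Ps1]) (auto simp: algebra_simps)
  have Ppos: "measure M P > 0"
  proof -
    have "s1 < s2" using a0 a1 by (simp add: s1_def s2_def divide_strict_right_mono)
    moreover have "s1 < 1" using a1 b1 by (simp add: s1_def divide_less_eq)
    moreover have "0 < s2" using a1 b0 by (simp add: s2_def)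
    ultimately have "clamp s1 < clamp s2" by (rule clamp_strict)
    then show ?thesis using mP mD0 by simp
  qed
  have fpos: "0 < f \<omega>" if \<omega>: "\<omega> \<in> P" for \<omega>
  proof -
    have D: "\<omega> \<in> D" and sp: "\<omega> \<in> space M" and v2: "VD \<omega> \<le> s2" and v1: "\<not> VD \<omega> \<le> s1"
      using \<omega> by (auto simp: P_def)
    have nC: "\<omega> \<notin> C" using D by (simp add: DC)
    have "(1 - a) * VD \<omega> \<le> b" using v2 a1 by (simp add: s2_def le_divide_eq mult.commute)
    then have "U2 \<omega> \<le> b" using D by (simp add: U2_def)
    then have "S'' \<omega> \<le> t" unfolding S''_def using pinv U201[of \<omega>] b_def by blast
    have "b < a + (1 - a) * VD \<omega>" using v1 a1 by (simp add: s1_def not_le divide_less_eq mult.commute)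
    then have "b < U1 \<omega>" using nC by (simp add: U1_def)
    then have "\<not> S' \<omega> \<le> t" unfolding S'_def using pinv U101[of \<omega>] b_def by (meson not_le)
    moreover have "u < Q \<omega>" using D by (simp add: D_def)
    ultimately show ?thesis unfolding f_def using \<open>S'' \<omega> \<le> t\<close> by (intro mult_pos_pos) auto
  qed
  have "integral\<^sup>L M f \<noteq> 0"
  proof
    assume "integral\<^sup>L M f = 0"
    then have "AE \<omega> in M. f \<omega> = 0"
      using integral_nonneg_eq_0_iff_AE[OF fint] fnn by (simp add: AE_I2)
    moreover have fm: "f \<in> borel_measurable M" using fint by auto
    have Ns: "{\<omega>\<in>space M. f \<omega> \<noteq> 0} \<in> sets M" using fm by measurable
    ultimately have "emeasure M {\<omega>\<in>space M. f \<omega> \<noteq> 0} = 0"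
      using AE_iff_measurable[OF Ns] by simp
    then have "measure M {\<omega>\<in>space M. f \<omega> \<noteq> 0} = 0" by (simp add: emeasure_eq_measure)
    moreover have "P \<subseteq> {\<omega>\<in>space M. f \<omega> \<noteq> 0}" using fpos by (auto simp: P_def D_def) (smt (verit) fpos P_def)
    then have "measure M P \<le> measure M {\<omega>\<in>space M. f \<omega> \<noteq> 0}" using Ns by (rule finite_measure_mono)
    ultimately show False using Ppos by simp
  qed
  then show ?thesis using L1 L2 fval by auto
qed

lemma same_law_scale:
  assumes "same_law M X Y"
  shows "same_law M (\<lambda>\<omega>. m * X \<omega>) (\<lambda>\<omega>. m * Y \<omega>)"
proof -
  have mX: "X \<in> borel_measurable M" and mY: "Y \<in> borel_measurable M"
    and d: "distr M borel X = distr M borel Y" using assms by (auto simp: same_law_def)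
  have "distr M borel (\<lambda>\<omega>. m * X \<omega>) = distr (distr M borel X) borel (\<lambda>x. m * x)"
    using mX by (subst distr_distr) (auto simp: comp_def)
  also have "\<dots> = distr (distr M borel Y) borel (\<lambda>x. m * x)" using d by simp
  also have "\<dots> = distr M borel (\<lambda>\<omega>. m * Y \<omega>)"
    using mY by (subst distr_distr) (auto simp: comp_def)
  finally show ?thesis using mX mY by (auto simp: same_law_def)
qed

theorem proposition5p7:
  fixes M :: "'a measure" and \<X> \<X>' :: "('a \<Rightarrow> real) set"
    and S0 :: real and S1 :: "'a \<Rightarrow> real" and \<rho> :: "('a \<Rightarrow> real) \<Rightarrow> ereal"
  assumes "prob_space M" and "nonatomic M"
    and "admissible_space M \<X>" and "admissible_space M \<X>'"
    and "\<forall>X\<in>\<X>. \<forall>Y\<in>\<X>'. integrable M (\<lambda>\<omega>. X \<omega> * Y \<omega>)"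
    and "eligible_asset M \<X> S0 S1"
    and "S_additive_risk_measure M \<X> S0 S1 \<rho>"
    and "\<exists>X\<in>\<X>. \<rho> X < \<infinity>"
    and "convex_fun \<X> \<rho>"
    and "lsc_on (weak_top M \<X> \<X>') \<rho>"
    and "law_invariant_fun M \<X> \<rho>"
    and "\<rho> (\<lambda>_. 0) < \<infinity>"
    and "risky M S1"
  shows "(\<forall>X\<in>\<X>. \<rho> X = ereal (S0 / integral\<^sup>L M S1 * integral\<^sup>L M (\<lambda>\<omega>. - X \<omega>)) + \<rho> (\<lambda>_. 0))
    \<and> (cash_additive_risk_measure M \<X> \<rho> \<longrightarrow> integral\<^sup>L M S1 = S0)"
proof -
  interpret P: prob_space M by fact
  note adm = assms(3)[unfolded admissible_space_def]
  have Xint: "\<And>X. X \<in> \<X> \<Longrightarrow> integrable M X" using adm by blast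
  have X0: "(\<lambda>_. 0) \<in> \<X>" using adm by blast
  have Xadd: "\<And>X Y. X \<in> \<X> \<Longrightarrow> Y \<in> \<X> \<Longrightarrow> (\<lambda>\<omega>. X \<omega> + Y \<omega>) \<in> \<X>" using adm by blast
  have Xsc: "\<And>X c. X \<in> \<X> \<Longrightarrow> (\<lambda>\<omega>. c * X \<omega>) \<in> \<X>" using adm by blast
  have Xlaw: "\<And>X Y. X \<in> \<X> \<Longrightarrow> same_law M X Y \<Longrightarrow> Y \<in> \<X>"
    using adm by (auto simp: law_invariant_set_def)
  note adm' = assms(4)[unfolded admissible_space_def]
  have X'int: "\<And>X. X \<in> \<X>' \<Longrightarrow> integrable M X" using adm' by blast
  have prodint: "\<And>X Y. X \<in> \<X> \<Longrightarrow> Y \<in> \<X>' \<Longrightarrow> integrable M (\<lambda>\<omega>. X \<omega> * Y \<omega>)"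
    using assms(5) by blast
  have S0pos: "0 < S0" and S1X: "S1 \<in> \<X>" and S1nn: "AE \<omega> in M. S1 \<omega> \<ge> 0"
    and S1n0: "\<not> (AE \<omega> in M. S1 \<omega> = 0)"
    using assms(6) by (auto simp: eligible_asset_def)
  have ES: "integral\<^sup>L M S1 > 0"
  proof -
    have "integral\<^sup>L M S1 \<noteq> 0"
      using integral_nonneg_eq_0_iff_AE[OF Xint[OF S1X] S1nn] S1n0 by simp
    moreover have "integral\<^sup>L M S1 \<ge> 0" using S1nn by (rule integral_nonneg_AE)
    ultimately show ?thesis by simp
  qed
  note Sadd = assms(7)[unfolded S_additive_risk_measure_def]
  have notminf: "\<And>X. X \<in> \<X> \<Longrightarrow> \<rho> X \<noteq> -\<infinity>" using Sadd by blast
  have Sadd': "\<And>X m. X \<in> \<X> \<Longrightarrow> \<rho> (\<lambda>\<omega>. X \<omega> + m * S1 \<omega>) = \<rho> X - ereal (m * S0)"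
    using Sadd by blast
  obtain r where r: "\<rho> (\<lambda>_. 0) = ereal r"
    using notminf[OF X0] assms(12) by (cases "\<rho> (\<lambda>_. 0)") auto
  have rhoS: "\<rho> (\<lambda>\<omega>. m * S1 \<omega>) = ereal (r - m * S0)" for m
    using Sadd'[OF X0, of m] r by simp
  have cvx: "\<And>X Y l. X \<in> \<X> \<Longrightarrow> Y \<in> \<X> \<Longrightarrow> 0 \<le> l \<Longrightarrow> l \<le> 1 \<Longrightarrow>
      \<rho> (\<lambda>\<omega>. l * X \<omega> + (1 - l) * Y \<omega>) \<le> ereal l * \<rho> X + ereal (1 - l) * \<rho> Y"
    using assms(9) by (auto simp: convex_fun_def)
  have lawf: "\<And>X Y. X \<in> \<X> \<Longrightarrow> Y \<in> \<X> \<Longrightarrow> same_law M X Y \<Longrightarrow> \<rho> X = \<rho> Y"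
    using assms(11) by (auto simp: law_invariant_fun_def)
  have ub: "\<rho> Z \<le> ereal r" if ZX: "Z \<in> \<X>" and Z0: "integral\<^sup>L M Z = 0" for Z
  proof (rule ccontr)
    assume nZ: "\<not> \<rho> Z \<le> ereal r"
    define K where "K = {W \<in> \<X>. \<rho> W \<le> ereal r}"
    have Kcl: "closedin (weak_top M \<X> \<X>') K"
      using assms(10) unfolding lsc_on_def K_def topspace_weak_top by blast
    have Kconv: "\<forall>W1\<in>K. \<forall>W2\<in>K. \<forall>l::real. 0 \<le> l \<and> l \<le> 1 \<longrightarrow> (\<lambda>\<omega>. l * W1 \<omega> + (1-l) * W2 \<omega>) \<in> K"
    proof (intro ballI allI impI)
      fix W1 W2 and l :: real assume W: "W1 \<in> K" "W2 \<in> K" and l: "0 \<le> l \<and> l \<le> 1"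
      have W1X: "W1 \<in> \<X>" and W2X: "W2 \<in> \<X>" using W by (auto simp: K_def)
      obtain w1 where w1: "\<rho> W1 = ereal w1" "w1 \<le> r"
        using W notminf[OF W1X] by (cases "\<rho> W1") (auto simp: K_def)
      obtain w2 where w2: "\<rho> W2 = ereal w2" "w2 \<le> r"
        using W notminf[OF W2X] by (cases "\<rho> W2") (auto simp: K_def)
      have "l * w1 + (1 - l) * w2 \<le> l * r + (1 - l) * r"
        using l w1 w2 by (intro add_mono mult_left_mono) auto
      then have "ereal l * \<rho> W1 + ereal (1 - l) * \<rho> W2 \<le> ereal r"
        using w1 w2 by (simp add: algebra_simps)
      moreover have "(\<lambda>\<omega>. l * W1 \<omega> + (1-l) * W2 \<omega>) \<in> \<X>"
        using W1X W2X by (intro Xadd Xsc)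
      ultimately show "(\<lambda>\<omega>. l * W1 \<omega> + (1-l) * W2 \<omega>) \<in> K"
        using cvx[OF W1X W2X] l unfolding K_def by (auto intro: order_trans)
    qed
    have K0: "(\<lambda>_. 0) \<in> K" using X0 r by (simp add: K_def)
    obtain Y \<alpha> where YX': "Y \<in> \<X>'" and Za: "\<alpha> < integral\<^sup>L M (\<lambda>\<omega>. Z \<omega> * Y \<omega>)"
      and Ka: "\<forall>W\<in>K. integral\<^sup>L M (\<lambda>\<omega>. W \<omega> * Y \<omega>) \<le> \<alpha>"
      using weak_sep[OF assms(4) assms(5), of K Z] Kcl Kconv ZX nZ K0
      by (auto simp: K_def)
    have a0: "0 \<le> \<alpha>" using Ka K0 by fastforce
    have eqS: "integral\<^sup>L M (\<lambda>\<omega>. S' \<omega> * Y \<omega>) = integral\<^sup>L M (\<lambda>\<omega>. S1 \<omega> * Y \<omega>)"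
      if SL: "same_law M S1 S'" for S'
    proof (rule ccontr)
      assume ne: "\<not> ?thesis"
      have S'X: "S' \<in> \<X>" using Xlaw[OF S1X SL] .
      define d where "d = integral\<^sup>L M (\<lambda>\<omega>. S' \<omega> * Y \<omega>) - integral\<^sup>L M (\<lambda>\<omega>. S1 \<omega> * Y \<omega>)"
      have dne: "d \<noteq> 0" using ne by (simp add: d_def)
      define m where "m = (\<alpha> + 1) / d"
      define W where "W = (\<lambda>\<omega>. m * S' \<omega> + (- m) * S1 \<omega>)"
      have mS'X: "(\<lambda>\<omega>. m * S' \<omega>) \<in> \<X>" using Xsc[OF S'X] .
      have WX: "W \<in> \<X>" unfolding W_def by (intro Xadd Xsc S'X S1X)
      have "\<rho> (\<lambda>\<omega>. m * S' \<omega>) = \<rho> (\<lambda>\<omega>. m * S1 \<omega>)"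
        using lawf[OF Xsc[OF S1X] mS'X same_law_scale[OF SL]] by simp
      then have "\<rho> W = ereal r"
        unfolding W_def using Sadd'[OF mS'X, of "-m"] rhoS[of m] by simp
      then have "W \<in> K" using WX by (simp add: K_def)
      then have le: "integral\<^sup>L M (\<lambda>\<omega>. W \<omega> * Y \<omega>) \<le> \<alpha>" using Ka by blast
      have "integral\<^sup>L M (\<lambda>\<omega>. W \<omega> * Y \<omega>) =
          m * integral\<^sup>L M (\<lambda>\<omega>. S' \<omega> * Y \<omega>) - m * integral\<^sup>L M (\<lambda>\<omega>. S1 \<omega> * Y \<omega>)"
        using prodint[OF S'X YX'] prodint[OF S1X YX'] unfolding W_def
        by (simp add: algebra_simps)
      also have "\<dots> = m * d" by (simp add: d_def right_diff_distrib)
      also have "\<dots> = \<alpha> + 1" using dne by (simp add: m_def)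
      finally show False using le by simp
    qed
    have "\<exists>c. AE \<omega> in M. Y \<omega> = c"
    proof (rule ccontr)
      assume nc: "\<not> ?thesis"
      have "\<forall>S'. same_law M S1 S' \<longrightarrow> integrable M S' \<and> integrable M (\<lambda>\<omega>. S' \<omega> * Y \<omega>)"
        using Xlaw[OF S1X] Xint prodint YX' by blast
      from rearr[OF assms(1,2) _ _ _ nc this]
      obtain S' S'' where "same_law M S1 S'" "same_law M S1 S''"
        "integral\<^sup>L M (\<lambda>\<omega>. S' \<omega> * Y \<omega>) \<noteq> integral\<^sup>L M (\<lambda>\<omega>. S'' \<omega> * Y \<omega>)"
        using assms(13) Xint[OF S1X] X'int[OF YX'] by (auto simp: risky_def)
      then show False using eqS by simp
    qed
    then obtain q where q: "AE \<omega> in M. Y \<omega> = q" by blast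
    have "integral\<^sup>L M (\<lambda>\<omega>. Z \<omega> * Y \<omega>) = integral\<^sup>L M (\<lambda>\<omega>. q * Z \<omega>)"
    proof (rule integral_cong_AE)
      show "(\<lambda>\<omega>. Z \<omega> * Y \<omega>) \<in> borel_measurable M"
        using borel_measurable_integrable[OF prodint[OF ZX YX']] .
      show "(\<lambda>\<omega>. q * Z \<omega>) \<in> borel_measurable M"
        using borel_measurable_integrable[OF Xint[OF ZX]] by measurable
      show "AE \<omega> in M. Z \<omega> * Y \<omega> = q * Z \<omega>" using q by (rule eventually_mono) (simp add: mult.commute)
    qed
    also have "\<dots> = 0" using Z0 by simp
    finally show False using Za a0 by simp
  qed
  have eqZ: "\<rho> Z = ereal r" if ZX: "Z \<in> \<X>" and Z0: "integral\<^sup>L M Z = 0" for Z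
  proof -
    have mZX: "(\<lambda>\<omega>. (-1) * Z \<omega>) \<in> \<X>" using Xsc[OF ZX] .
    have "integral\<^sup>L M (\<lambda>\<omega>. (-1) * Z \<omega>) = 0" using Z0 by simp
    then have u2: "\<rho> (\<lambda>\<omega>. (-1) * Z \<omega>) \<le> ereal r" using ub mZX by blast
    have u1: "\<rho> Z \<le> ereal r" using ub ZX Z0 by blast
    obtain z where z: "\<rho> Z = ereal z" using u1 notminf[OF ZX] by (cases "\<rho> Z") auto
    obtain z' where z': "\<rho> (\<lambda>\<omega>. (-1) * Z \<omega>) = ereal z'"
      using u2 notminf[OF mZX] by (cases "\<rho> (\<lambda>\<omega>. (-1) * Z \<omega>)") auto
    have "(\<lambda>\<omega>. (1/2) * Z \<omega> + (1 - 1/2) * ((-1) * Z \<omega>)) = (\<lambda>_. 0::real)" by auto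
    then have "ereal r \<le> ereal (1/2) * \<rho> Z + ereal (1 - 1/2) * \<rho> (\<lambda>\<omega>. (-1) * Z \<omega>)"
      using cvx[OF ZX mZX, of "1/2"] r by simp
    then have "r \<le> z/2 + z'/2" using z z' by simp
    then show ?thesis using u1 u2 z z' by simp
  qed
  have main: "\<rho> X = ereal (S0 / integral\<^sup>L M S1 * integral\<^sup>L M (\<lambda>\<omega>. - X \<omega>)) + \<rho> (\<lambda>_. 0)"
    if XX: "X \<in> \<X>" for X
  proof -
    define k where "k = integral\<^sup>L M X / integral\<^sup>L M S1"
    define Z where "Z = (\<lambda>\<omega>. X \<omega> + (-k) * S1 \<omega>)"
    have ZX: "Z \<in> \<X>" unfolding Z_def by (intro Xadd Xsc XX S1X)
    have "integral\<^sup>L M Z = integral\<^sup>L M X - k * integral\<^sup>L M S1"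
      unfolding Z_def using Xint[OF XX] Xint[OF S1X] by simp
    also have "\<dots> = 0" using ES by (simp add: k_def)
    finally have "\<rho> Z = ereal r" using eqZ ZX by blast
    moreover have "(\<lambda>\<omega>. Z \<omega> + k * S1 \<omega>) = X" unfolding Z_def by auto
    ultimately have "\<rho> X = ereal (r - k * S0)" using Sadd'[OF ZX, of k] by simp
    moreover have "S0 / integral\<^sup>L M S1 * integral\<^sup>L M (\<lambda>\<omega>. - X \<omega>) = - k * S0"
      by (simp add: k_def)
    ultimately show ?thesis using r by simp
  qed
  have cash: "integral\<^sup>L M S1 = S0" if ca: "cash_additive_risk_measure M \<X> \<rho>"
  proof -
    have bnd: "\<forall>X\<in>borel_measurable M. (\<exists>C. AE \<omega> in M. \<bar>X \<omega>\<bar> \<le> C) \<longrightarrow> X \<in> \<X>"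
      using adm by (elim conjE)
    have "\<exists>C. AE \<omega> in M. \<bar>(1::real)\<bar> \<le> C" by (intro exI[of _ 1]) simp
    then have c1: "(\<lambda>_. 1::real) \<in> \<X>" using bnd by simp
    have ca2: "\<forall>X\<in>\<X>. \<forall>m::real. \<rho> (\<lambda>\<omega>. X \<omega> + m * 1) = \<rho> X - ereal (m * 1)"
      using ca unfolding S_additive_risk_measure_def by (elim conjE)
    have "\<rho> (\<lambda>\<omega>. 0 + 1 * 1) = \<rho> (\<lambda>_. 0) - ereal (1 * 1)"
      using bspec[OF ca2 X0] by (rule spec)
    then have e1: "\<rho> (\<lambda>_. 1) = ereal (r - 1)" using r by simp
    have i1: "integral\<^sup>L M (\<lambda>\<omega>. - (1::real)) = -1" using P.prob_space by simp
    have "\<rho> (\<lambda>_. 1) = ereal (S0 / integral\<^sup>L M S1 * (-1)) + ereal r"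
      using main[OF c1] unfolding r i1 .
    with e1 have "r - 1 = - (S0 / integral\<^sup>L M S1) + r" by simp
    then have "S0 / integral\<^sup>L M S1 = 1" by simp
    then show ?thesis using ES by (simp add: field_simps)
  qed
  show ?thesis using main cash by blast
qed

end
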